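(* Let $\overrightarrow{W}$ be a Morse sequence on a simplicial complex $K$. Then for every $p$, $\partial_p\circ\widetilde{\curlywedge}_p=\widetilde{\curlywedge}_{p-1}\circ\widehat{\partial}_p$ and $\delta_p\circ\widetilde{\curlyvee}_p=\widetilde{\curlyvee}_{p+1}\circ\widehat{\delta}_p$ as maps on $\widehat W[p]$.
   Context: A simplicial complex $K$ is a finite collection of non-empty finite sets closed under taking non-empty subsets; $\dim\sigma=|\sigma|-1$, $K^{(p)}$ the set of $p$-simplices. A pair $(\sigma,\tau)$ with $\sigma\subsetneq\tau$ is a free pair for $K$ if $\tau$ is the only simplex other than $\sigma$ containing $\sigma$; $K$ is then an elementary expansion of $K\setminus\{\sigma,\tau\}$. If $\nu$ is a facet (maximal simplex) of $K$, $K$ is an elementary filling of $K\setminus\{\nu\}$. A Morse sequence on $K$ is a sequence $\langle\emptyset=K_0,\dots,K_k=K\rangle$ with each $K_i$ an elementary expansion or filling of $K_{i-1}$; simplices added by fillings are critical; for an expansion $K_i=K_{i-1}\cup\{\sigma,\tau\}$, $\sigma\subset\tau$, $\sigma$ is lower regular and $\tau$ upper regular. $\widehat W$ is the set of critical simplices. $K[p]$ is the $\mathbb{Z}_2$-vector space of subsets of $K^{(p)}$ (sum = symmetric difference, $0=\emptyset$), $\widehat W[p]=\{c\in K[p]:c\subseteq\widehat W\}$. For $\sigma\in K^{(p)}$, $\partial(\sigma)=\{\tau\in K^{(p-1)}:\tau\subset\sigma\}$, $\delta(\sigma)=\{\tau\in K^{(p+1)}:\sigma\subset\tau\}$, with linear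 extensions $\partial_p:K[p]\to K[p-1]$, $\delta_p:K[p]\to K[p+1]$. The reference map $\curlywedge$ is the unique map assigning to each $p$-simplex an element of $\widehat W[p]$, extended linearly, with $\curlywedge(\nu)=\{\nu\}$ for critical $\nu$ and $\curlywedge(\tau)=0=\curlywedge(\partial(\tau))$ for upper regular $\tau$; the coreference map $\curlyvee$ is the unique such map with $\curlyvee(\nu)=\{\nu\}$ for critical $\nu$ and $\curlyvee(\sigma)=0=\curlyvee(\delta(\sigma))$ for lower regular $\sigma$. $\widehat\partial_p:\widehat W[p]\to\widehat W[p-1]$, $\widehat\partial_p(c)=\curlywedge(\partial_p(c))$, and $\widehat\delta_p:\widehat W[p]\to\widehat W[p+1]$, $\widehat\delta_p(c)=\curlyvee(\delta_p(c))$. The extension map $\widetilde\curlywedge_p:\widehat W[p]\to K[p]$ and coextension map $\widetilde\curlyvee_p:\widehat W[p]\to K[p]$ are the linear maps with $\widetilde\curlywedge(\kappa)=\{\nu\in K:\kappa\in\curlyvee(\nu)\}$ and $\widetilde\curlyvee(\kappa)=\{\nu\in K:\kappa\in\curlywedge(\nu)\}$ for critical $p$-simplices $\kappa$. *)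

theory Defs
  imports Main
begin

definition simplicial_complex :: "'v set set \<Rightarrow> bool" where
  "simplicial_complex K \<longleftrightarrow> finite K \<and>
     (\<forall>\<sigma>\<in>K. finite \<sigma> \<and> \<sigma> \<noteq> {}) \<and>
     (\<forall>\<sigma>\<in>K. \<forall>\<rho>. \<rho> \<subseteq> \<sigma> \<and> \<rho> \<noteq> {} \<longrightarrow> \<rho> \<in> K)"

definition simplices_of_dim :: "'v set set \<Rightarrow> nat \<Rightarrow> 'v set set" where
  "simplices_of_dim K p = {\<sigma>\<in>K. card \<sigma> = p + 1}"

definition free_pair :: "'v set set \<Rightarrow> 'v set \<Rightarrow> 'v set \<Rightarrow> bool" where
  "free_pair K \<sigma> \<tau> \<longleftrightarrow> \<sigma> \<subset> \<tau> \<and> \<sigma> \<in> K \<and> \<tau> \<in> K \<and>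
     (\<forall>\<rho>\<in>K. \<sigma> \<subseteq> \<rho> \<and> \<rho> \<noteq> \<sigma> \<longrightarrow> \<rho> = \<tau>)"

definition elementary_expansion :: "'v set set \<Rightarrow> 'v set set \<Rightarrow> bool" where
  "elementary_expansion K L \<longleftrightarrow>
     (\<exists>\<sigma> \<tau>. free_pair K \<sigma> \<tau> \<and> L = K - {\<sigma>, \<tau>})"

definition facet :: "'v set set \<Rightarrow> 'v set \<Rightarrow> bool" where
  "facet K \<nu> \<longleftrightarrow> \<nu> \<in> K \<and> (\<forall>\<rho>\<in>K. \<nu> \<subseteq> \<rho> \<longrightarrow> \<rho> = \<nu>)"

definition elementary_filling :: "'v set set \<Rightarrow> 'v set set \<Rightarrow> bool" where
  "elementary_filling K L \<longleftrightarrow> (\<exists>\<nu>. facet K \<nu> \<and> L = K - {\<nu>})"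

definition morse_sequence :: "'v set set list \<Rightarrow> 'v set set \<Rightarrow> bool" where
  "morse_sequence Ks K \<longleftrightarrow> Ks \<noteq> [] \<and> Ks ! 0 = {} \<and> last Ks = K \<and>
     (\<forall>i < length Ks. simplicial_complex (Ks ! i)) \<and>
     (\<forall>i. i + 1 < length Ks \<longrightarrow>
        elementary_expansion (Ks ! (i+1)) (Ks ! i) \<or> elementary_filling (Ks ! (i+1)) (Ks ! i))"

definition critical :: "'v set set list \<Rightarrow> 'v set set" where
  "critical Ks = {\<nu>. \<exists>i. i + 1 < length Ks \<and> Ks ! (i+1) - Ks ! i = {\<nu>}}"

definition lower_regular :: "'v set set list \<Rightarrow> 'v set set" where
  "lower_regular Ks = {\<sigma>. \<exists>i \<tau>. i + 1 < length Ks \<and> \<sigma> \<subset> \<tau> \<and> Ks ! (i+1) - Ks ! i = {\<sigma>, \<tau>}}"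

definition upper_regular :: "'v set set list \<Rightarrow> 'v set set" where
  "upper_regular Ks = {\<tau>. \<exists>i \<sigma>. i + 1 < length Ks \<and> \<sigma> \<subset> \<tau> \<and> Ks ! (i+1) - Ks ! i = {\<sigma>, \<tau>}}"

text \<open>Z2-linear extension: sum (symmetric difference) of F a over a \<in> A.\<close>
definition zsum :: "('a \<Rightarrow> 'b set) \<Rightarrow> 'a set \<Rightarrow> 'b set" where
  "zsum F A = {x. odd (card {a\<in>A. x \<in> F a})}"

definition bd :: "'v set set \<Rightarrow> 'v set \<Rightarrow> 'v set set" where
  "bd K \<sigma> = {\<tau>\<in>K. \<tau> \<subset> \<sigma> \<and> card \<tau> + 1 = card \<sigma>}"

definition cobd :: "'v set set \<Rightarrow> 'v set \<Rightarrow> 'v set set" where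
  "cobd K \<sigma> = {\<tau>\<in>K. \<sigma> \<subset> \<tau> \<and> card \<tau> = card \<sigma> + 1}"

definition bd_chain :: "'v set set \<Rightarrow> 'v set set \<Rightarrow> 'v set set" where
  "bd_chain K c = zsum (bd K) c"

definition cobd_chain :: "'v set set \<Rightarrow> 'v set set \<Rightarrow> 'v set set" where
  "cobd_chain K c = zsum (cobd K) c"

definition is_reference :: "'v set set \<Rightarrow> 'v set set list \<Rightarrow> ('v set \<Rightarrow> 'v set set) \<Rightarrow> bool" where
  "is_reference K Ks f \<longleftrightarrow>
     (\<forall>\<sigma>. \<sigma> \<notin> K \<longrightarrow> f \<sigma> = {}) \<and>
     (\<forall>\<sigma>\<in>K. f \<sigma> \<subseteq> critical Ks \<inter> simplices_of_dim K (card \<sigma> - 1)) \<and>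
     (\<forall>\<nu>\<in>critical Ks. f \<nu> = {\<nu>}) \<and>
     (\<forall>\<tau>\<in>upper_regular Ks. f \<tau> = {} \<and> zsum f (bd K \<tau>) = {})"

definition is_coreference :: "'v set set \<Rightarrow> 'v set set list \<Rightarrow> ('v set \<Rightarrow> 'v set set) \<Rightarrow> bool" where
  "is_coreference K Ks f \<longleftrightarrow>
     (\<forall>\<sigma>. \<sigma> \<notin> K \<longrightarrow> f \<sigma> = {}) \<and>
     (\<forall>\<sigma>\<in>K. f \<sigma> \<subseteq> critical Ks \<inter> simplices_of_dim K (card \<sigma> - 1)) \<and>
     (\<forall>\<nu>\<in>critical Ks. f \<nu> = {\<nu>}) \<and>
     (\<forall>\<sigma>\<in>lower_regular Ks. f \<sigma> = {} \<and> zsum f (cobd K \<sigma>) = {})"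

definition reference :: "'v set set \<Rightarrow> 'v set set list \<Rightarrow> 'v set \<Rightarrow> 'v set set" where
  "reference K Ks = (THE f. is_reference K Ks f)"

definition coreference :: "'v set set \<Rightarrow> 'v set set list \<Rightarrow> 'v set \<Rightarrow> 'v set set" where
  "coreference K Ks = (THE f. is_coreference K Ks f)"

definition hat_bd :: "'v set set \<Rightarrow> 'v set set list \<Rightarrow> 'v set set \<Rightarrow> 'v set set" where
  "hat_bd K Ks c = zsum (reference K Ks) (bd_chain K c)"

definition hat_cobd :: "'v set set \<Rightarrow> 'v set set list \<Rightarrow> 'v set set \<Rightarrow> 'v set set" where
  "hat_cobd K Ks c = zsum (coreference K Ks) (cobd_chain K c)"

definition extension :: "'v set set \<Rightarrow> 'v set set list \<Rightarrow> 'v set set \<Rightarrow> 'v set set" where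
  "extension K Ks c = zsum (\<lambda>\<kappa>. {\<nu>\<in>K. \<kappa> \<in> coreference K Ks \<nu>}) c"

definition coextension :: "'v set set \<Rightarrow> 'v set set list \<Rightarrow> 'v set set \<Rightarrow> 'v set set" where
  "coextension K Ks c = zsum (\<lambda>\<kappa>. {\<nu>\<in>K. \<kappa> \<in> reference K Ks \<nu>}) c"

definition critical_chains :: "'v set set \<Rightarrow> 'v set set list \<Rightarrow> nat \<Rightarrow> 'v set set set" where
  "critical_chains K Ks p = {c. c \<subseteq> critical Ks \<inter> simplices_of_dim K p}"

end

theory Submission
  imports Defs
begin


lemma zsum_mem: "x \<in> zsum F A \<longleftrightarrow> odd (card {a\<in>A. x \<in> F a})"
  by (simp add: zsum_def)

lemma odd_card_ex: "odd (card {a\<in>A. P a}) \<Longrightarrow> \<exists>a\<in>A. P a"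
proof -
  assume "odd (card {a\<in>A. P a})"
  then have "card {a\<in>A. P a} \<noteq> 0" by (metis even_zero)
  then have "{a\<in>A. P a} \<noteq> {}" by (metis card.empty)
  then show ?thesis by blast
qed

lemma zsum_sub: "zsum F A \<subseteq> \<Union>(F ` A)"
proof
  fix x assume "x \<in> zsum F A"
  then have "odd (card {a\<in>A. x \<in> F a})" by (simp add: zsum_mem)
  then obtain a where "a \<in> A" "x \<in> F a" using odd_card_ex[of A "\<lambda>a. x \<in> F a"] by blast
  then show "x \<in> \<Union>(F ` A)" by blast
qed

lemma zsum_empty_fun: "(\<And>a. a\<in>A \<Longrightarrow> F a = {}) \<Longrightarrow> zsum F A = {}"
  using zsum_sub[of F A] by auto

lemma zsum_cong: "(\<And>a. a\<in>A \<Longrightarrow> F a = G a) \<Longrightarrow> zsum F A = zsum G A"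
  unfolding zsum_def by (metis (mono_tags, lifting) mem_Collect_eq Collect_cong)

lemma zsum_id: assumes "finite A" "\<And>a. a\<in>A \<Longrightarrow> F a = {a}" shows "zsum F A = A"
proof -
  have "{a\<in>A. x \<in> F a} = (if x \<in> A then {x} else {})" for x using assms(2) by auto
  then show ?thesis unfolding zsum_def by auto
qed

lemma zsum_single: "zsum F {a} = F a"
proof -
  have "{b\<in>{a}. x \<in> F b} = (if x \<in> F a then {a} else {})" for x by auto
  then show ?thesis unfolding zsum_def by auto
qed

lemma zsum_symdiff:
  assumes "finite A" "finite B"
  shows "zsum F ((A - B) \<union> (B - A)) = (zsum F A - zsum F B) \<union> (zsum F B - zsum F A)"
proof -
  have *: "odd (card {a\<in>(A - B) \<union> (B - A). x \<in> F a}) \<longleftrightarrow>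
      \<not> (odd (card {a\<in>A. x \<in> F a}) \<longleftrightarrow> odd (card {a\<in>B. x \<in> F a}))" for x
  proof -
    let ?P = "\<lambda>S. {a\<in>S. x \<in> F a}"
    have fin: "finite (?P S)" if "S \<subseteq> A \<union> B" for S
      by (rule finite_subset[of _ "A \<union> B"]) (use that assms in auto)
    have e1: "?P ((A - B) \<union> (B - A)) = ?P (A - B) \<union> ?P (B - A)" by auto
    have c1: "card (?P ((A - B) \<union> (B - A))) = card (?P (A-B)) + card (?P (B - A))"
      unfolding e1 by (rule card_Un_disjoint) (use assms in auto)
    have e2: "?P A = ?P (A - B) \<union> ?P (A \<inter> B)" by auto
    have c2: "card (?P A) = card (?P (A-B)) + card (?P (A \<inter> B))"
      unfolding e2 by (rule card_Un_disjoint) (use assms in auto)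
    have e3: "?P B = ?P (B - A) \<union> ?P (A \<inter> B)" by auto
    have c3: "card (?P B) = card (?P (B-A)) + card (?P (A \<inter> B))"
      unfolding e3 by (rule card_Un_disjoint) (use assms in auto)
    show ?thesis unfolding c1 c2 c3 by (simp add: even_add) argo
  qed
  show ?thesis unfolding zsum_def using * by auto
qed

lemma zsum_union_disj:
  assumes "finite A" "finite B" "A \<inter> B = {}"
  shows "zsum F (A \<union> B) = (zsum F A - zsum F B) \<union> (zsum F B - zsum F A)"
proof -
  have "A \<union> B = (A - B) \<union> (B - A)" using assms(3) by auto
  then show ?thesis using zsum_symdiff[OF assms(1,2)] by simp
qed

lemma zsum_remove:
  assumes "finite A" "a \<in> A"
  shows "zsum F A = (F a - zsum F (A - {a})) \<union> (zsum F (A - {a}) - F a)"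
proof -
  have "A = {a} \<union> (A - {a})" using assms by auto
  then have "zsum F A = zsum F ({a} \<union> (A - {a}))" by simp
  also have "\<dots> = (F a - zsum F (A - {a})) \<union> (zsum F (A - {a}) - F a)"
    using zsum_union_disj[of "{a}" "A - {a}" F] assms by (simp add: zsum_single)
  finally show ?thesis .
qed

lemma zsum_remove_zero:
  assumes "finite A" "a \<in> A" "zsum F A = {}"
  shows "F a = zsum F (A - {a})"
  using zsum_remove[OF assms(1,2), of F] assms(3) by auto

lemma parity_sum:
  assumes "finite S"
  shows "odd (card {s\<in>S. odd (f s :: nat)}) \<longleftrightarrow> odd (\<Sum>s\<in>S. f s)"
  using assms
proof (induction S rule: finite_induct)
  case empty then show ?case by simp
next
  case (insert t S)
  have fin: "finite {s\<in>S. odd (f s)}" using insert by simp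
  show ?case
  proof (cases "odd (f t)")
    case True
    then have "{s\<in>insert t S. odd (f s)} = insert t {s\<in>S. odd (f s)}" by auto
    then have "card {s\<in>insert t S. odd (f s)} = Suc (card {s\<in>S. odd (f s)})"
      using insert fin by simp
    then show ?thesis using insert True by simp
  next
    case False
    then have "{s\<in>insert t S. odd (f s)} = {s\<in>S. odd (f s)}" by auto
    then show ?thesis using insert False by simp
  qed
qed

lemma card_filter_sum: "finite A \<Longrightarrow> card {a\<in>A. P a} = (\<Sum>a\<in>A. if P a then 1 else 0 :: nat)"
  using sum.inter_filter[of A "\<lambda>_. 1::nat" P] by simp

lemma zsum_fubini:
  assumes "finite A" "\<And>a. a \<in> A \<Longrightarrow> finite (F a)"
  shows "zsum G (zsum F A) = zsum (\<lambda>a. zsum G (F a)) A"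
proof -
  define U where "U = \<Union>(F ` A)"
  have finU: "finite U" unfolding U_def using assms by auto
  have *: "odd (card {y\<in>zsum F A. x \<in> G y}) \<longleftrightarrow> odd (card {a\<in>A. x \<in> zsum G (F a)})" for x
  proof -
    define V where "V = {y\<in>U. x \<in> G y}"
    have finV: "finite V" using finU V_def by simp
    define c where "c y = card {a\<in>A. y \<in> F a}" for y
    have m1: "y \<in> zsum F A \<longleftrightarrow> odd (c y)" for y by (simp add: zsum_mem c_def)
    have m2: "y \<in> U" if "odd (c y)" for y
      using odd_card_ex[of A "\<lambda>a. y \<in> F a"] that unfolding c_def U_def by blast
    have "{y\<in>zsum F A. x \<in> G y} = {y\<in>V. odd (c y)}"
      unfolding V_def using m1 m2 by blast
    then have "odd (card {y\<in>zsum F A. x \<in> G y}) \<longleftrightarrow> odd (\<Sum>y\<in>V. c y)"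
      using parity_sum[OF finV, of c] by simp
    also have "(\<Sum>y\<in>V. c y) = (\<Sum>y\<in>V. \<Sum>a\<in>A. (if y \<in> F a then 1 else 0))"
      unfolding c_def by (rule sum.cong) (use card_filter_sum[OF assms(1)] in auto)
    also have "\<dots> = (\<Sum>a\<in>A. \<Sum>y\<in>V. (if y \<in> F a then 1 else 0))"
      by (rule sum.swap)
    also have "\<dots> = (\<Sum>a\<in>A. card {y\<in>F a. x \<in> G y})"
    proof (rule sum.cong)
      fix a assume a: "a \<in> A"
      have "{y\<in>V. y \<in> F a} = {y\<in>F a. x \<in> G y}" using a unfolding V_def U_def by auto
      then show "(\<Sum>y\<in>V. (if y \<in> F a then 1 else 0)) = card {y\<in>F a. x \<in> G y}"
        using card_filter_sum[OF finV, of "\<lambda>y. y \<in> F a"] by simp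
    qed simp
    finally have "odd (card {y\<in>zsum F A. x \<in> G y}) \<longleftrightarrow> odd (\<Sum>a\<in>A. card {y\<in>F a. x \<in> G y})" .
    also have "\<dots> \<longleftrightarrow> odd (card {a\<in>A. odd (card {y\<in>F a. x \<in> G y})})"
      using parity_sum[OF assms(1)] by simp
    finally show ?thesis unfolding zsum_mem .
  qed
  show ?thesis
  proof (rule set_eqI)
    fix x
    show "x \<in> zsum G (zsum F A) \<longleftrightarrow> x \<in> zsum (\<lambda>a. zsum G (F a)) A"
      using *[of x] by (simp only: zsum_mem)
  qed
qed




definition gprop :: "'v set set \<Rightarrow> 'v set set \<Rightarrow> 'v set set \<Rightarrow> ('v set \<Rightarrow> 'v set set) \<Rightarrow> ('v set \<Rightarrow> 'v set set) \<Rightarrow> bool" where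
  "gprop K W Kl N f \<longleftrightarrow> (\<forall>x. x \<notin> K \<longrightarrow> f x = {}) \<and> (\<forall>x\<in>K. f x \<subseteq> {w\<in>W. card w = card x}) \<and>
     (\<forall>w\<in>W. f w = {w}) \<and> (\<forall>k\<in>Kl. f k = {} \<and> zsum f (N k) = {})"

lemma gpropD:
  assumes "gprop K W Kl N f"
  shows "\<And>x. x \<notin> K \<Longrightarrow> f x = {}" "\<And>w. w\<in>W \<Longrightarrow> f w = {w}"
    "\<And>k. k\<in>Kl \<Longrightarrow> f k = {}" "\<And>k. k\<in>Kl \<Longrightarrow> zsum f (N k) = {}"
    "\<And>x. x\<in>K \<Longrightarrow> f x \<subseteq> {w\<in>W. card w = card x}"
  using assms unfolding gprop_def by simp_all

lemma gen_ref:
  fixes K W S Kl :: "'v set set" and mate :: "'v set \<Rightarrow> 'v set" and N :: "'v set \<Rightarrow> 'v set set"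
    and r :: "'v set \<Rightarrow> nat"
  assumes finK: "finite K"
    and part: "K = W \<union> S \<union> Kl" "W \<inter> S = {}" "W \<inter> Kl = {}" "S \<inter> Kl = {}"
    and mateS: "\<And>s. s \<in> S \<Longrightarrow> mate s \<in> Kl \<and> mate (mate s) = s"
    and mateK: "\<And>k. k \<in> Kl \<Longrightarrow> mate k \<in> S \<and> mate (mate k) = k"
    and Nk: "\<And>k. k \<in> Kl \<Longrightarrow> mate k \<in> N k \<and> N k \<subseteq> K \<and>
          (\<forall>x\<in>N k - {mate k}. r x < r (mate k) \<and> card x = card (mate k))"
  shows "\<exists>!f. gprop K W Kl N f"
proof -
  define Pm where "Pm m f \<longleftrightarrow> (\<forall>x. \<not> (x\<in>K \<and> r x < m) \<longrightarrow> f x = {}) \<and>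
     (\<forall>x\<in>K. f x \<subseteq> {w\<in>W. card w = card x}) \<and> (\<forall>w\<in>W. r w < m \<longrightarrow> f w = {w}) \<and>
     (\<forall>k\<in>Kl. f k = {} \<and> (r (mate k) < m \<longrightarrow> zsum f (N k) = {}))" for m f
  have ex: "\<exists>f. Pm m f" for m
  proof (induction m)
    case 0
    have "Pm 0 (\<lambda>x. {})" unfolding Pm_def by simp
    then show ?case by blast
  next
    case (Suc m)
    then obtain f where f: "Pm m f" by blast
    note fu = f[unfolded Pm_def]
    note f1 = fu[THEN conjunct1, rule_format]
    note f2 = fu[THEN conjunct2, THEN conjunct1, rule_format]
    note f3 = fu[THEN conjunct2, THEN conjunct2, THEN conjunct1, rule_format]
    note f45 = fu[THEN conjunct2, THEN conjunct2, THEN conjunct2, rule_format]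
    have f4: "\<And>k. k\<in>Kl \<Longrightarrow> f k = {}" using f45 by simp
    have f5: "\<And>k. k\<in>Kl \<Longrightarrow> r (mate k) < m \<Longrightarrow> zsum f (N k) = {}" using f45 by simp
    define f' where "f' x = (if x \<in> K \<and> r x = m then (if x \<in> W then {x} else if x \<in> S
        then zsum f (N (mate x) - {x}) else {}) else f x)" for x
    have c1: "\<forall>x. \<not> (x\<in>K \<and> r x < Suc m) \<longrightarrow> f' x = {}"
    proof (intro allI impI)
      fix x assume "\<not> (x\<in>K \<and> r x < Suc m)"
      then have ne: "\<not> (x \<in> K \<and> r x = m)" and ne2: "\<not> (x\<in>K \<and> r x < m)" by auto
      have "f' x = f x" unfolding f'_def by (rule if_not_P[OF ne])
      then show "f' x = {}" using f1[OF ne2] by simp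
    qed
    have c2: "\<forall>x\<in>K. f' x \<subseteq> {w\<in>W. card w = card x}"
    proof
      fix x assume xK: "x \<in> K"
      show "f' x \<subseteq> {w\<in>W. card w = card x}"
      proof (cases "r x = m \<and> x \<notin> W \<and> x \<in> S")
        case True
        then have fx: "f' x = zsum f (N (mate x) - {x})" using xK unfolding f'_def by auto
        have mm: "mate x \<in> Kl" "mate (mate x) = x" using mateS True by auto
        have "zsum f (N (mate x) - {x}) \<subseteq> {w\<in>W. card w = card x}"
        proof
          fix w assume "w \<in> zsum f (N (mate x) - {x})"
          then have "w \<in> \<Union>(f ` (N (mate x) - {x}))" using zsum_sub[of f "N (mate x) - {x}"] by auto
          then obtain y where y: "y \<in> N (mate x) - {x}" "w \<in> f y" by auto
          have yK: "y \<in> K" and cy: "card y = card x" using Nk[OF mm(1)] mm y(1) by auto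
          then show "w \<in> {w\<in>W. card w = card x}" using f2[OF yK] y(2) cy by auto
        qed
        then show ?thesis using fx by simp
      next
        case False
        show ?thesis
        proof (cases "r x = m")
          case True
          then show ?thesis using False xK unfolding f'_def by auto
        next
          case False
          then have "f' x = f x" unfolding f'_def by simp
          then show ?thesis using f2[OF xK] by simp
        qed
      qed
    qed
    have c3: "\<forall>w\<in>W. r w < Suc m \<longrightarrow> f' w = {w}"
    proof (intro ballI impI)
      fix w assume w: "w \<in> W" "r w < Suc m"
      have wK: "w \<in> K" using w part by blast
      show "f' w = {w}"
      proof (cases "r w = m")
        case True then show ?thesis using w wK unfolding f'_def by simp
      next
        case False then show ?thesis using w f3 unfolding f'_def by simp
      qed
    qed
    have c4: "\<forall>k\<in>Kl. f' k = {} \<and> (r (mate k) < Suc m \<longrightarrow> zsum f' (N k) = {})"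
    proof
      fix k assume kK: "k \<in> Kl"
      have kn: "k \<notin> W" "k \<notin> S" using kK part by blast+
      have fk: "f' k = {}" using f4[OF kK] kn unfolding f'_def by simp
      have Nk': "mate k \<in> N k" "N k \<subseteq> K" "\<And>x. x\<in>N k - {mate k} \<Longrightarrow> r x < r (mate k)"
        using Nk[OF kK] by auto
      have finN: "finite (N k)" using Nk'(2) finK finite_subset by blast
      have ms: "mate k \<in> S" using mateK[OF kK] by simp
      have "zsum f' (N k) = {}" if lt: "r (mate k) < Suc m"
      proof (cases "r (mate k) < m")
        case True
        have "zsum f' (N k) = zsum f (N k)"
        proof (rule zsum_cong)
          fix a assume "a \<in> N k"
          then have "r a < m" using True Nk'(3) by (cases "a = mate k") force+
          then show "f' a = f a" unfolding f'_def by auto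
        qed
        then show ?thesis using f5[OF kK True] by simp
      next
        case False
        then have rm: "r (mate k) = m" using lt by simp
        have mmk: "mate (mate k) = k" using mateK[OF kK] by simp
        have mkK: "mate k \<in> K" using Nk' by blast
        have mkW: "mate k \<notin> W" using ms part by blast
        have fm: "f' (mate k) = zsum f (N k - {mate k})"
          using rm ms mkK mkW mmk unfolding f'_def by simp
        have "zsum f' (N k - {mate k}) = zsum f (N k - {mate k})"
        proof (rule zsum_cong)
          fix a assume "a \<in> N k - {mate k}"
          then have "r a < m" using rm Nk'(3) by force
          then show "f' a = f a" unfolding f'_def by auto
        qed
        then show ?thesis using zsum_remove[OF finN Nk'(1), of f'] fm by simp
      qed
      then show "f' k = {} \<and> (r (mate k) < Suc m \<longrightarrow> zsum f' (N k) = {})" using fk by blast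
    qed
    have "Pm (Suc m) f'" unfolding Pm_def by (intro conjI c1 c2 c3 c4)
    then show ?case by blast
  qed
  define m0 where "m0 = Suc (Max (r ` K))"
  have rlt: "x \<in> K \<Longrightarrow> r x < m0" for x unfolding m0_def using finK
    by (simp add: le_imp_less_Suc Max_ge)
  obtain f where f: "Pm m0 f" using ex by blast
  note fu = f[unfolded Pm_def]
  note g1 = fu[THEN conjunct1, rule_format]
  note g2 = fu[THEN conjunct2, THEN conjunct1, rule_format]
  note g3 = fu[THEN conjunct2, THEN conjunct2, THEN conjunct1, rule_format]
  note g45 = fu[THEN conjunct2, THEN conjunct2, THEN conjunct2, rule_format]
  have g4: "\<And>k. k\<in>Kl \<Longrightarrow> f k = {}" using g45 by simp
  have g5: "\<And>k. k\<in>Kl \<Longrightarrow> r (mate k) < m0 \<Longrightarrow> zsum f (N k) = {}" using g45 by simp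
  have gf: "gprop K W Kl N f"
    unfolding gprop_def
  proof (intro conjI)
    show "\<forall>x. x \<notin> K \<longrightarrow> f x = {}" using g1 by simp
    show "\<forall>x\<in>K. f x \<subseteq> {w\<in>W. card w = card x}" using g2 by simp
    have wK: "\<And>w. w \<in> W \<Longrightarrow> w \<in> K" using part by blast
    show "\<forall>w\<in>W. f w = {w}" using g3 rlt wK by simp
    have mK: "\<And>k. k \<in> Kl \<Longrightarrow> mate k \<in> K" using Nk by blast
    show "\<forall>k\<in>Kl. f k = {} \<and> zsum f (N k) = {}" using g4 g5 rlt mK by simp
  qed
  have uniq: "f1 = f2" if g1: "gprop K W Kl N f1" and g2: "gprop K W Kl N f2" for f1 f2
  proof
    fix x
    show "f1 x = f2 x"
    proof (induction "r x" arbitrary: x rule: less_induct)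
      case less
      show ?case
      proof (cases "x \<in> K")
        case False
        then show ?thesis using gpropD(1)[OF g1] gpropD(1)[OF g2] by simp
      next
        case True
        then consider "x \<in> W" | "x \<in> Kl" | "x \<in> S" using part by blast
        then show ?thesis
        proof cases
          case 1 then show ?thesis using gpropD(2)[OF g1] gpropD(2)[OF g2] by simp
        next
          case 2 then show ?thesis using gpropD(3)[OF g1] gpropD(3)[OF g2] by simp
        next
          case 3
          define k where "k = mate x"
          have kK: "k \<in> Kl" and mk: "mate k = x" using mateS 3 k_def by auto
          have Nk': "x \<in> N k" "N k \<subseteq> K" "\<And>y. y\<in>N k - {x} \<Longrightarrow> r y < r x"
            using Nk[OF kK] mk by auto
          have finN: "finite (N k)" using Nk'(2) finK finite_subset by blast
          have "f1 x = zsum f1 (N k - {x})"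
            by (rule zsum_remove_zero[OF finN Nk'(1) gpropD(4)[OF g1 kK]])
          also have "\<dots> = zsum f2 (N k - {x})"
            by (rule zsum_cong) (simp add: less Nk'(3))
          also have "\<dots> = f2 x"
            by (rule zsum_remove_zero[OF finN Nk'(1) gpropD(4)[OF g2 kK], symmetric])
          finally show ?thesis .
        qed
      qed
    qed
  qed
  show ?thesis by (rule ex1I[where P="gprop K W Kl N" and a=f, OF gf]) (rule uniq[OF _ gf])
qed




lemma gen_main:
  fixes K W A B :: "'v set set" and F F' Q G :: "'v set \<Rightarrow> 'v set set"
  assumes finK: "finite K"
    and part: "K = W \<union> A \<union> B" "W \<inter> A = {}" "W \<inter> B = {}" "A \<inter> B = {}"
    and FK: "\<And>v. v \<in> K \<Longrightarrow> F v \<subseteq> K" and F'K: "\<And>v. v \<in> K \<Longrightarrow> F' v \<subseteq> K"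
    and tr: "\<And>a b. a \<in> K \<Longrightarrow> b \<in> K \<Longrightarrow> a \<in> F b \<longleftrightarrow> b \<in> F' a"
    and FF: "\<And>x. x \<subseteq> K \<Longrightarrow> zsum F (zsum F x) = {}"
    and QW: "\<And>w. w \<in> W \<Longrightarrow> Q w = {w}"
    and QA: "\<And>a. a \<in> A \<Longrightarrow> Q a = {} \<and> zsum Q (F' a) = {}"
    and GW: "\<And>w. w \<in> W \<Longrightarrow> G w = {w}"
    and GB: "\<And>b. b \<in> B \<Longrightarrow> G b = {} \<and> zsum G (F b) = {}"
    and extr: "\<And>d. d \<subseteq> B \<Longrightarrow> d \<noteq> {} \<Longrightarrow> \<exists>b\<in>d. \<exists>a\<in>A. a \<in> F b \<and> (\<forall>b'\<in>d. a \<in> F b' \<longrightarrow> b' = b)"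
    and cW: "c \<subseteq> W"
  shows "zsum F (zsum (\<lambda>\<kappa>. {\<nu>\<in>K. \<kappa> \<in> Q \<nu>}) c) =
         zsum (\<lambda>\<kappa>. {\<nu>\<in>K. \<kappa> \<in> Q \<nu>}) (zsum G (zsum F c))"
proof -
  define H where "H \<kappa> = {\<nu>\<in>K. \<kappa> \<in> Q \<nu>}" for \<kappa>
  define E where "E c = zsum H c" for c
  have finH: "finite (H k)" for k unfolding H_def using finK by simp
  have subK: "finite S" if "S \<subseteq> K" for S using that finK finite_subset by blast
  have WK: "W \<subseteq> K" "A \<subseteq> K" "B \<subseteq> K" using part(1) by auto
  have FsubK: "zsum F S \<subseteq> K" if SK: "S \<subseteq> K" for S
  proof
    fix y assume "y \<in> zsum F S"
    then have "y \<in> \<Union>(F ` S)" using zsum_sub[of F S] by auto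
    then obtain v where "v \<in> S" "y \<in> F v" by auto
    then show "y \<in> K" using FK SK by auto
  qed
  have Eprops: "E c \<subseteq> K \<and> E c \<inter> W = c \<and> E c \<inter> A = {} \<and> zsum F (E c) \<inter> A = {}"
    if cW: "c \<subseteq> W" for c
  proof (intro conjI)
    show EK: "E c \<subseteq> K"
    proof
      fix y assume "y \<in> E c"
      then have "y \<in> \<Union>(H ` c)" using zsum_sub[of H c] unfolding E_def by auto
      then show "y \<in> K" unfolding H_def by auto
    qed
    have finc: "finite c" using cW WK subK by auto
    show "E c \<inter> W = c"
    proof -
      have "{\<kappa>\<in>c. w \<in> H \<kappa>} = c \<inter> {w}" if "w \<in> W" for w
        using that QW WK unfolding H_def by auto
      then have "w \<in> E c \<longleftrightarrow> w \<in> c" if "w \<in> W" for w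
        using that unfolding E_def zsum_mem by (cases "w \<in> c") auto
      then show ?thesis using cW by auto
    qed
    show "E c \<inter> A = {}"
    proof -
      have e: "{\<kappa>\<in>c. a \<in> H \<kappa>} = {}" if "a \<in> A" for a
        using that QA unfolding H_def by auto
      have "a \<notin> E c" if "a \<in> A" for a unfolding E_def zsum_mem e[OF that] by simp
      then show ?thesis by auto
    qed
    show "zsum F (E c) \<inter> A = {}"
    proof -
      have fub: "zsum F (E c) = zsum (\<lambda>k. zsum F (H k)) c"
        unfolding E_def by (rule zsum_fubini[OF finc finH])
      have nz: "a \<notin> zsum F (H k)" if aA: "a \<in> A" for a k
      proof -
        have aK: "a \<in> K" using aA WK by auto
        have "{\<nu>\<in>H k. a \<in> F \<nu>} = {\<nu>\<in>F' a. k \<in> Q \<nu>}"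
          using tr[OF aK] F'K[OF aK] unfolding H_def by auto
        moreover have "k \<notin> zsum Q (F' a)" using QA[OF aA] by simp
        ultimately show ?thesis unfolding zsum_mem by simp
      qed
      have "a \<notin> zsum F (E c)" if aA: "a \<in> A" for a
      proof
        assume "a \<in> zsum F (E c)"
        then have "a \<in> \<Union>((\<lambda>k. zsum F (H k)) ` c)" using zsum_sub[of "\<lambda>k. zsum F (H k)" c] fub by auto
        then obtain k where "a \<in> zsum F (H k)" by auto
        then show False using nz[OF aA] by simp
      qed
      then show ?thesis by auto
    qed
  qed
  have uniq: "x = y" if xK: "x \<subseteq> K" and yK: "y \<subseteq> K" and xA: "x \<inter> A = {}" and yA: "y \<inter> A = {}"
    and xyW: "x \<inter> W = y \<inter> W" and fxA: "zsum F x \<inter> A = {}" and fyA: "zsum F y \<inter> A = {}" for x y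
  proof (rule ccontr)
    assume ne: "x \<noteq> y"
    define d where "d = (x - y) \<union> (y - x)"
    have dB: "d \<subseteq> B"
    proof
      fix z assume z: "z \<in> d"
      then have zK: "z \<in> K" using xK yK unfolding d_def by auto
      have zxy: "z \<in> x \<or> z \<in> y" using z unfolding d_def by auto
      have "z \<notin> A"
      proof
        assume "z \<in> A"
        then show False using zxy xA yA by (auto simp: disjoint_iff)
      qed
      moreover have "z \<notin> W"
      proof
        assume zW: "z \<in> W"
        have "z \<in> x \<inter> W \<longleftrightarrow> z \<in> y \<inter> W" using xyW by simp
        then have "z \<in> x \<longleftrightarrow> z \<in> y" using zW by simp
        then show False using z unfolding d_def by simp
      qed
      ultimately show "z \<in> B" using zK part(1) by auto
    qed
    have dne: "d \<noteq> {}"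
    proof
      assume "d = {}"
      then have "x \<subseteq> y" "y \<subseteq> x" unfolding d_def by auto
      then show False using ne by simp
    qed
    have fx: "finite x" "finite y" using xK yK subK by auto
    have fd0: "zsum F d = (zsum F x - zsum F y) \<union> (zsum F y - zsum F x)"
      unfolding d_def by (rule zsum_symdiff[OF fx])
    have fd: "a \<notin> zsum F d" if aA: "a \<in> A" for a
    proof -
      have "a \<notin> zsum F x" using fxA aA by (auto simp: disjoint_iff)
      moreover have "a \<notin> zsum F y" using fyA aA by (auto simp: disjoint_iff)
      ultimately show ?thesis unfolding fd0 by simp
    qed
    obtain b where b: "b \<in> d" and ex: "\<exists>a\<in>A. a \<in> F b \<and> (\<forall>b'\<in>d. a \<in> F b' \<longrightarrow> b' = b)"
      using extr[OF dB dne] by (rule bexE)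
    obtain a where a: "a \<in> A" and ab: "a \<in> F b \<and> (\<forall>b'\<in>d. a \<in> F b' \<longrightarrow> b' = b)"
      using ex by (rule bexE)
    have "{b'\<in>d. a \<in> F b'} = {b}"
    proof
      show "{b'\<in>d. a \<in> F b'} \<subseteq> {b}" using ab by blast
      show "{b} \<subseteq> {b'\<in>d. a \<in> F b'}" using ab b by blast
    qed
    then have "a \<in> zsum F d" unfolding zsum_mem by simp
    then show False using fd[OF a] by simp
  qed
  define x where "x = E c"
  define y where "y = zsum F x"
  have xp: "x \<subseteq> K" "x \<inter> W = c" "x \<inter> A = {}" "zsum F x \<inter> A = {}" using Eprops[OF cW] x_def by auto
  have yK: "y \<subseteq> K" using FsubK[OF xp(1)] y_def by simp
  have yA: "y \<inter> A = {}" using xp(4) y_def by simp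
  have Fy: "zsum F y = {}" using FF[OF xp(1)] y_def by simp
  define c' where "c' = y \<inter> W"
  have c'W: "c' \<subseteq> W" unfolding c'_def by auto
  have Ec': "E c' \<subseteq> K" "E c' \<inter> W = c'" "E c' \<inter> A = {}" "zsum F (E c') \<inter> A = {}"
    using Eprops[OF c'W] by auto
  have yW: "y \<inter> W = E c' \<inter> W" using Ec'(2) c'_def by simp
  have yE: "y = E c'"
    by (rule uniq[OF yK Ec'(1) yA Ec'(3) yW _ Ec'(4)]) (simp add: Fy)
  have finc: "finite c" using cW WK subK by auto
  have finxB: "finite (x \<inter> B)" using xp(1) subK by auto
  have xdec: "x = c \<union> (x \<inter> B)"
  proof
    show "x \<subseteq> c \<union> (x \<inter> B)"
    proof
      fix z assume z: "z \<in> x"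
      then have "z \<in> K" "z \<notin> A" using xp by auto
      then show "z \<in> c \<union> (x \<inter> B)" using z xp(2) part(1) by auto
    qed
    show "c \<union> (x \<inter> B) \<subseteq> x" using xp(2) by auto
  qed
  have cxB: "c \<inter> (x \<inter> B) = {}" using cW part(3) by auto
  have y1: "y = (zsum F c - zsum F (x \<inter> B)) \<union> (zsum F (x \<inter> B) - zsum F c)"
  proof -
    have "y = zsum F (c \<union> (x \<inter> B))" unfolding y_def using xdec by simp
    also have "\<dots> = (zsum F c - zsum F (x \<inter> B)) \<union> (zsum F (x \<inter> B) - zsum F c)"
      by (rule zsum_union_disj[OF finc finxB cxB])
    finally show ?thesis .
  qed
  have f1: "finite (zsum F c)" using FsubK[of c] cW WK subK by auto
  have f2: "finite (zsum F (x \<inter> B))" using FsubK[of "x \<inter> B"] xp(1) subK by auto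
  have z0: "zsum G (zsum F (x \<inter> B)) = {}"
  proof -
    have finF: "\<And>b. b \<in> x \<inter> B \<Longrightarrow> finite (F b)" using FK WK subK by auto
    have "zsum G (zsum F (x \<inter> B)) = zsum (\<lambda>b. zsum G (F b)) (x \<inter> B)"
      by (rule zsum_fubini[OF finxB finF])
    also have "\<dots> = {}" by (rule zsum_empty_fun) (use GB in auto)
    finally show ?thesis .
  qed
  have Gy1: "zsum G y = zsum G (zsum F c)"
    unfolding y1 zsum_symdiff[OF f1 f2] z0 by simp
  have fyW: "finite (y \<inter> W)" "finite (y \<inter> B)" using yK subK by auto
  have ydec: "y = (y \<inter> W) \<union> (y \<inter> B)" using yK yA part(1) by auto
  have yWB: "(y \<inter> W) \<inter> (y \<inter> B) = {}" using part(3) by auto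
  have Gy2: "zsum G y = y \<inter> W"
  proof -
    have "zsum G y = zsum G ((y \<inter> W) \<union> (y \<inter> B))" using ydec by simp
    also have "\<dots> = (zsum G (y \<inter> W) - zsum G (y \<inter> B)) \<union> (zsum G (y \<inter> B) - zsum G (y \<inter> W))"
      by (rule zsum_union_disj[OF fyW yWB])
    also have "zsum G (y \<inter> W) = y \<inter> W" by (rule zsum_id[OF fyW(1)]) (use GW in auto)
    also have "zsum G (y \<inter> B) = {}" by (rule zsum_empty_fun) (use GB in auto)
    finally show ?thesis by simp
  qed
  have "c' = zsum G (zsum F c)" using Gy1 Gy2 c'_def by simp
  then show ?thesis using yE unfolding y_def x_def E_def H_def by simp
qed




definition stp :: "'v set set list \<Rightarrow> 'v set \<Rightarrow> nat" where
  "stp Ks x = (LEAST i. x \<in> Ks ! (Suc i))"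

definition Dd :: "'v set set list \<Rightarrow> nat \<Rightarrow> 'v set set" where
  "Dd Ks i = Ks ! (Suc i) - Ks ! i"

definition mt :: "'v set set list \<Rightarrow> 'v set \<Rightarrow> 'v set" where
  "mt Ks x = (SOME y. y \<in> Dd Ks (stp Ks x) \<and> y \<noteq> x)"

lemma free_pairD:
  assumes "free_pair L \<sigma> \<tau>"
  shows "\<sigma> \<subset> \<tau>" "\<sigma> \<in> L" "\<tau> \<in> L" "\<And>\<rho>. \<rho> \<in> L \<Longrightarrow> \<sigma> \<subseteq> \<rho> \<Longrightarrow> \<rho> \<noteq> \<sigma> \<Longrightarrow> \<rho> = \<tau>"
proof -
  have c: "\<sigma> \<subset> \<tau> \<and> \<sigma> \<in> L \<and> \<tau> \<in> L \<and> (\<forall>\<rho>\<in>L. \<sigma> \<subseteq> \<rho> \<and> \<rho> \<noteq> \<sigma> \<longrightarrow> \<rho> = \<tau>)"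
    using assms unfolding free_pair_def .
  from c show "\<sigma> \<subset> \<tau>" by (elim conjE)
  from c show "\<sigma> \<in> L" by (elim conjE)
  from c show "\<tau> \<in> L" by (elim conjE)
  from c have q: "\<forall>\<rho>\<in>L. \<sigma> \<subseteq> \<rho> \<and> \<rho> \<noteq> \<sigma> \<longrightarrow> \<rho> = \<tau>" by (elim conjE)
  show "\<rho> = \<tau>" if "\<rho> \<in> L" "\<sigma> \<subseteq> \<rho>" "\<rho> \<noteq> \<sigma>" for \<rho>
    using q that by blast
qed

lemma scD:
  assumes "simplicial_complex L" "\<sigma> \<in> L"
  shows "finite \<sigma>" "\<sigma> \<noteq> {}" "\<And>\<rho>. \<rho> \<subseteq> \<sigma> \<Longrightarrow> \<rho> \<noteq> {} \<Longrightarrow> \<rho> \<in> L" "finite L"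
proof -
  have c: "finite L \<and> (\<forall>\<sigma>\<in>L. finite \<sigma> \<and> \<sigma> \<noteq> {}) \<and> (\<forall>\<sigma>\<in>L. \<forall>\<rho>. \<rho> \<subseteq> \<sigma> \<and> \<rho> \<noteq> {} \<longrightarrow> \<rho> \<in> L)"
    using assms(1) unfolding simplicial_complex_def .
  then show "finite L" by (elim conjE)
  from c have "\<forall>\<sigma>\<in>L. finite \<sigma> \<and> \<sigma> \<noteq> {}" by (elim conjE)
  then have "finite \<sigma> \<and> \<sigma> \<noteq> {}" using assms(2) by (rule bspec)
  then show "finite \<sigma>" by (rule conjunct1)
  from \<open>finite \<sigma> \<and> \<sigma> \<noteq> {}\<close> show "\<sigma> \<noteq> {}" by (rule conjunct2)
  from c have "\<forall>\<sigma>\<in>L. \<forall>\<rho>. \<rho> \<subseteq> \<sigma> \<and> \<rho> \<noteq> {} \<longrightarrow> \<rho> \<in> L" by (elim conjE)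
  then show "\<rho> \<in> L" if "\<rho> \<subseteq> \<sigma>" "\<rho> \<noteq> {}" for \<rho> using assms(2) that by blast
qed

lemma card_free:
  assumes "simplicial_complex L" "free_pair L \<sigma> \<tau>"
  shows "card \<tau> = card \<sigma> + 1"
proof -
  have st1: "\<sigma> \<subset> \<tau>" using free_pairD(1)[OF assms(2)] .
  have st2: "\<tau> \<in> L" using free_pairD(3)[OF assms(2)] .
  have ft: "finite \<tau>" using scD(1)[OF assms(1) st2] .
  obtain v where v: "v \<in> \<tau>" "v \<notin> \<sigma>" using st1 by blast
  have sub: "insert v \<sigma> \<subseteq> \<tau>" using st1 v by blast
  then have "insert v \<sigma> \<in> L" using scD(3)[OF assms(1) st2] by blast
  then have "insert v \<sigma> = \<tau>" using free_pairD(4)[OF assms(2)] v by blast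
  moreover have "finite \<sigma>" using ft st1 finite_subset by blast
  ultimately show ?thesis using v by auto
qed

context
  fixes K :: "'v set set" and Ks :: "'v set set list"
  assumes cK: "simplicial_complex K" and ms: "morse_sequence Ks K"
begin

lemma msc: "Ks \<noteq> [] \<and> Ks ! 0 = {} \<and> last Ks = K \<and>
     (\<forall>i < length Ks. simplicial_complex (Ks ! i)) \<and>
     (\<forall>i. i + 1 < length Ks \<longrightarrow>
        elementary_expansion (Ks ! (i+1)) (Ks ! i) \<or> elementary_filling (Ks ! (i+1)) (Ks ! i))"
  using ms unfolding morse_sequence_def .

lemma ne: "Ks \<noteq> []" using msc by (elim conjE)
lemma K0: "Ks ! 0 = {}" using msc by (elim conjE)
lemma Klast: "Ks ! (length Ks - 1) = K"
proof -
  have "last Ks = K" using msc by (elim conjE)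
  then show ?thesis using ne by (simp add: last_conv_nth)
qed

lemma cx: "i < length Ks \<Longrightarrow> simplicial_complex (Ks ! i)"
proof -
  assume i: "i < length Ks"
  have "\<forall>i < length Ks. simplicial_complex (Ks ! i)" using msc by (elim conjE)
  then show ?thesis using i by blast
qed

lemma msstep: "i + 1 < length Ks \<Longrightarrow>
        elementary_expansion (Ks ! (i+1)) (Ks ! i) \<or> elementary_filling (Ks ! (i+1)) (Ks ! i)"
proof -
  assume i: "i + 1 < length Ks"
  have "\<forall>i. i + 1 < length Ks \<longrightarrow>
        elementary_expansion (Ks ! (i+1)) (Ks ! i) \<or> elementary_filling (Ks ! (i+1)) (Ks ! i)"
    using msc by (elim conjE)
  then show ?thesis using i by blast
qed

lemma step:
  assumes "i + 1 < length Ks"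
  shows "Ks ! i \<subseteq> Ks ! (Suc i) \<and> ((\<exists>\<sigma> \<tau>. free_pair (Ks ! (Suc i)) \<sigma> \<tau> \<and> Dd Ks i = {\<sigma>, \<tau>})
     \<or> (\<exists>\<nu>. Dd Ks i = {\<nu>}))"
proof -
  have "elementary_expansion (Ks ! (i+1)) (Ks ! i) \<or> elementary_filling (Ks ! (i+1)) (Ks ! i)"
    using msstep[OF assms] .
  then show ?thesis
  proof
    assume "elementary_expansion (Ks ! (i+1)) (Ks ! i)"
    then obtain \<sigma> \<tau> where fp: "free_pair (Ks ! (i+1)) \<sigma> \<tau>" and e: "Ks ! i = Ks ! (i+1) - {\<sigma>, \<tau>}"
      unfolding elementary_expansion_def by blast
    have "\<sigma> \<in> Ks ! (i+1)" "\<tau> \<in> Ks ! (i+1)" using free_pairD(2,3)[OF fp] by auto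
    then have "Dd Ks i = {\<sigma>, \<tau>}" unfolding Dd_def using e by auto
    then show ?thesis using fp e by auto
  next
    assume "elementary_filling (Ks ! (i+1)) (Ks ! i)"
    then obtain \<nu> where fp: "facet (Ks ! (i+1)) \<nu>" and e: "Ks ! i = Ks ! (i+1) - {\<nu>}"
      unfolding elementary_filling_def by blast
    have "\<nu> \<in> Ks ! (i+1)" using fp unfolding facet_def by (rule conjunct1)
    then have "Dd Ks i = {\<nu>}" unfolding Dd_def using e by auto
    then show ?thesis using e by auto
  qed
qed

lemma mono: "i \<le> j \<Longrightarrow> j < length Ks \<Longrightarrow> Ks ! i \<subseteq> Ks ! j"
proof (induction j)
  case 0 then show ?case by simp
next
  case (Suc j)
  show ?case
  proof (cases "i = Suc j")
    case True then show ?thesis by simp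
  next
    case False
    then have "Ks ! i \<subseteq> Ks ! j" using Suc by simp
    also have "\<dots> \<subseteq> Ks ! (Suc j)" using step[of j] Suc by simp
    finally show ?thesis .
  qed
qed

lemma subK: "i < length Ks \<Longrightarrow> Ks ! i \<subseteq> K"
  using mono[of i "length Ks - 1"] Klast ne by simp

lemma st_props:
  assumes "x \<in> K"
  shows "Suc (stp Ks x) < length Ks" "x \<in> Ks ! (Suc (stp Ks x))" "x \<notin> Ks ! (stp Ks x)"
proof -
  have x1: "x \<in> Ks ! (length Ks - 1)" using assms Klast by simp
  then have "length Ks - 1 \<noteq> 0" using K0 by auto
  then obtain m where m: "length Ks - 1 = Suc m" by (cases "length Ks - 1") auto
  have xm: "x \<in> Ks ! (Suc m)" using x1 m by simp
  show "x \<in> Ks ! (Suc (stp Ks x))" unfolding stp_def by (rule LeastI[of _ m]) (rule xm)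
  have "stp Ks x \<le> m" unfolding stp_def by (rule Least_le) (rule xm)
  then show "Suc (stp Ks x) < length Ks" using m by simp
  show "x \<notin> Ks ! (stp Ks x)"
  proof (cases "stp Ks x")
    case 0 then show ?thesis using K0 by simp
  next
    case (Suc k)
    then have "k < (LEAST i. x \<in> Ks ! (Suc i))" unfolding stp_def by simp
    then have "x \<notin> Ks ! (Suc k)" by (rule not_less_Least)
    then show ?thesis using Suc by simp
  qed
qed

lemma mem_iff:
  assumes "x \<in> K" "j < length Ks"
  shows "x \<in> Ks ! j \<longleftrightarrow> stp Ks x < j"
proof
  assume "x \<in> Ks ! j"
  show "stp Ks x < j"
  proof (rule ccontr)
    assume "\<not> stp Ks x < j"
    then have "Ks ! j \<subseteq> Ks ! (stp Ks x)" using mono st_props(1)[OF assms(1)] by simp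
    then show False using st_props(3)[OF assms(1)] \<open>x \<in> Ks ! j\<close> by blast
  qed
next
  assume "stp Ks x < j"
  then show "x \<in> Ks ! j" using mono[of "Suc (stp Ks x)" j] assms st_props(2)[OF assms(1)] by auto
qed

lemma Dd_st:
  assumes "i + 1 < length Ks" "x \<in> Dd Ks i"
  shows "stp Ks x = i" "x \<in> K"
proof -
  show xK: "x \<in> K" using assms subK[of "Suc i"] unfolding Dd_def by auto
  have "stp Ks x < Suc i" using mem_iff[OF xK, of "Suc i"] assms unfolding Dd_def by auto
  moreover have "\<not> stp Ks x < i" using mem_iff[OF xK, of i] assms unfolding Dd_def by auto
  ultimately show "stp Ks x = i" by simp
qed

lemma Dd_alt: "Dd Ks i = Ks ! (i+1) - Ks ! i" by (simp add: Dd_def)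

lemma crit_iff: "\<nu> \<in> critical Ks \<longleftrightarrow> \<nu> \<in> K \<and> Dd Ks (stp Ks \<nu>) = {\<nu>}"
proof
  assume "\<nu> \<in> critical Ks"
  then obtain i where i: "i + 1 < length Ks" "Dd Ks i = {\<nu>}" unfolding critical_def Dd_alt by blast
  then show "\<nu> \<in> K \<and> Dd Ks (stp Ks \<nu>) = {\<nu>}" using Dd_st[OF i(1)] by auto
next
  assume t: "\<nu> \<in> K \<and> Dd Ks (stp Ks \<nu>) = {\<nu>}"
  have "Suc (stp Ks \<nu>) < length Ks" using st_props(1) t by blast
  moreover have "Ks ! (stp Ks \<nu> + 1) - Ks ! (stp Ks \<nu>) = {\<nu>}" using t Dd_alt by metis
  ultimately show "\<nu> \<in> critical Ks" unfolding critical_def by auto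
qed

lemma lower_iff: "\<sigma> \<in> lower_regular Ks \<longleftrightarrow> \<sigma> \<in> K \<and> (\<exists>\<tau>. \<sigma> \<subset> \<tau> \<and> Dd Ks (stp Ks \<sigma>) = {\<sigma>, \<tau>})"
proof
  assume "\<sigma> \<in> lower_regular Ks"
  then obtain i \<tau> where i: "i + 1 < length Ks" "\<sigma> \<subset> \<tau>" "Dd Ks i = {\<sigma>, \<tau>}"
    unfolding lower_regular_def Dd_alt by blast
  have "\<sigma> \<in> Dd Ks i" using i(3) by simp
  then have "stp Ks \<sigma> = i" "\<sigma> \<in> K" using Dd_st[OF i(1)] by auto
  then show "\<sigma> \<in> K \<and> (\<exists>\<tau>. \<sigma> \<subset> \<tau> \<and> Dd Ks (stp Ks \<sigma>) = {\<sigma>, \<tau>})"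
    using i(2,3) by (intro conjI exI[of _ \<tau>]) simp_all
next
  assume "\<sigma> \<in> K \<and> (\<exists>\<tau>. \<sigma> \<subset> \<tau> \<and> Dd Ks (stp Ks \<sigma>) = {\<sigma>, \<tau>})"
  then obtain \<tau> where t: "\<sigma> \<in> K" "\<sigma> \<subset> \<tau>" "Dd Ks (stp Ks \<sigma>) = {\<sigma>, \<tau>}" by blast
  have "Suc (stp Ks \<sigma>) < length Ks" using st_props(1)[OF t(1)] .
  moreover have "Ks ! (stp Ks \<sigma> + 1) - Ks ! (stp Ks \<sigma>) = {\<sigma>, \<tau>}" using t(3) Dd_alt by metis
  ultimately show "\<sigma> \<in> lower_regular Ks" unfolding lower_regular_def mem_Collect_eq
    by (intro exI[of _ "stp Ks \<sigma>"] exI[of _ \<tau>] conjI) (use t(2) in simp_all)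
qed

lemma upper_iff: "\<tau> \<in> upper_regular Ks \<longleftrightarrow> \<tau> \<in> K \<and> (\<exists>\<sigma>. \<sigma> \<subset> \<tau> \<and> Dd Ks (stp Ks \<tau>) = {\<sigma>, \<tau>})"
proof
  assume "\<tau> \<in> upper_regular Ks"
  then obtain i \<sigma> where i: "i + 1 < length Ks" "\<sigma> \<subset> \<tau>" "Dd Ks i = {\<sigma>, \<tau>}"
    unfolding upper_regular_def Dd_alt by blast
  have "\<tau> \<in> Dd Ks i" using i(3) by simp
  then have "stp Ks \<tau> = i" "\<tau> \<in> K" using Dd_st[OF i(1)] by auto
  then show "\<tau> \<in> K \<and> (\<exists>\<sigma>. \<sigma> \<subset> \<tau> \<and> Dd Ks (stp Ks \<tau>) = {\<sigma>, \<tau>})"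
    using i(2,3) by (intro conjI exI[of _ \<sigma>]) simp_all
next
  assume "\<tau> \<in> K \<and> (\<exists>\<sigma>. \<sigma> \<subset> \<tau> \<and> Dd Ks (stp Ks \<tau>) = {\<sigma>, \<tau>})"
  then obtain \<sigma> where t: "\<tau> \<in> K" "\<sigma> \<subset> \<tau>" "Dd Ks (stp Ks \<tau>) = {\<sigma>, \<tau>}" by blast
  have "Suc (stp Ks \<tau>) < length Ks" using st_props(1)[OF t(1)] .
  moreover have "Ks ! (stp Ks \<tau> + 1) - Ks ! (stp Ks \<tau>) = {\<sigma>, \<tau>}" using t(3) Dd_alt by metis
  ultimately show "\<tau> \<in> upper_regular Ks" unfolding upper_regular_def mem_Collect_eq
    by (intro exI[of _ "stp Ks \<tau>"] exI[of _ \<sigma>] conjI) (use t(2) in simp_all)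
qed

lemma pair_free:
  assumes "i + 1 < length Ks" "\<sigma> \<subset> \<tau>" "Dd Ks i = {\<sigma>, \<tau>}"
  shows "free_pair (Ks ! (Suc i)) \<sigma> \<tau>"
proof -
  have ne: "\<sigma> \<noteq> \<tau>" using assms(2) by blast
  have nsing: "\<not> (\<exists>\<nu>. Dd Ks i = {\<nu>})"
  proof
    assume "\<exists>\<nu>. Dd Ks i = {\<nu>}"
    then obtain \<nu> where "Dd Ks i = {\<nu>}" by (rule exE)
    then have eq: "{\<sigma>, \<tau>} = {\<nu>}" using assms(3) by simp
    have "\<sigma> \<in> {\<nu>}" "\<tau> \<in> {\<nu>}" unfolding eq[symmetric] by simp_all
    then show False using ne by simp
  qed
  have "(\<exists>\<sigma> \<tau>. free_pair (Ks ! (Suc i)) \<sigma> \<tau> \<and> Dd Ks i = {\<sigma>, \<tau>}) \<or> (\<exists>\<nu>. Dd Ks i = {\<nu>})"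
    using step[OF assms(1)] by (rule conjunct2)
  then have "\<exists>\<sigma> \<tau>. free_pair (Ks ! (Suc i)) \<sigma> \<tau> \<and> Dd Ks i = {\<sigma>, \<tau>}" using nsing by (elim disjE) simp_all
  then obtain \<sigma>' \<tau>' where fp: "free_pair (Ks ! (Suc i)) \<sigma>' \<tau>'" "Dd Ks i = {\<sigma>', \<tau>'}"
    by (elim exE conjE)
  have st: "\<sigma>' \<subset> \<tau>'" using free_pairD(1)[OF fp(1)] .
  have e: "{\<sigma>', \<tau>'} = {\<sigma>, \<tau>}" using fp(2)[symmetric] assms(3) by (rule trans)
  have m1: "\<tau>' \<in> {\<sigma>, \<tau>}" "\<sigma>' \<in> {\<sigma>, \<tau>}" unfolding e[symmetric] by simp_all
  have "\<sigma>' = \<sigma> \<and> \<tau>' = \<tau>"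
  proof (cases "\<sigma>' = \<sigma>")
    case True
    have "\<tau>' \<noteq> \<sigma>" using True st by auto
    then show ?thesis using True m1(1) by simp
  next
    case False
    then have s1: "\<sigma>' = \<tau>" using m1(2) by simp
    have "\<tau>' \<noteq> \<tau>" using s1 st by auto
    then have "\<tau>' = \<sigma>" using m1(1) by simp
    then have "\<tau> \<subset> \<sigma>" using s1 st by simp
    then show ?thesis using assms(2) by (simp add: less_asym')
  qed
  then show ?thesis using fp(1) by simp
qed

lemma partition:
  "K = critical Ks \<union> lower_regular Ks \<union> upper_regular Ks"
  "critical Ks \<inter> lower_regular Ks = {}" "critical Ks \<inter> upper_regular Ks = {}"
  "lower_regular Ks \<inter> upper_regular Ks = {}"
proof -
  show "K = critical Ks \<union> lower_regular Ks \<union> upper_regular Ks"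
  proof
    show "K \<subseteq> critical Ks \<union> lower_regular Ks \<union> upper_regular Ks"
    proof
      fix x assume xK: "x \<in> K"
      have xD: "x \<in> Dd Ks (stp Ks x)" using st_props(2,3)[OF xK] unfolding Dd_def by simp
      have sl: "stp Ks x + 1 < length Ks" using st_props(1)[OF xK] by simp
      have s: "(\<exists>\<sigma> \<tau>. free_pair (Ks ! (Suc (stp Ks x))) \<sigma> \<tau> \<and> Dd Ks (stp Ks x) = {\<sigma>, \<tau>})
          \<or> (\<exists>\<nu>. Dd Ks (stp Ks x) = {\<nu>})"
        using step[OF sl] by (rule conjunct2)
      from s consider (e) \<sigma> \<tau> where "free_pair (Ks ! (Suc (stp Ks x))) \<sigma> \<tau>" "Dd Ks (stp Ks x) = {\<sigma>, \<tau>}"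
        | (f) \<nu> where "Dd Ks (stp Ks x) = {\<nu>}" by (elim disjE exE conjE)
      then show "x \<in> critical Ks \<union> lower_regular Ks \<union> upper_regular Ks"
      proof cases
        case e
        have st: "\<sigma> \<subset> \<tau>" using free_pairD(1)[OF e(1)] .
        from xD have "x = \<sigma> \<or> x = \<tau>" unfolding e(2) by simp
        then show ?thesis
        proof
          assume xs: "x = \<sigma>"
          have "x \<subset> \<tau> \<and> Dd Ks (stp Ks x) = {x, \<tau>}" using st e(2) xs by simp
          then have "x \<in> lower_regular Ks" unfolding lower_iff using xK by blast
          then show ?thesis by (rule UnI1[OF UnI2])
        next
          assume xt: "x = \<tau>"
          have "\<sigma> \<subset> x \<and> Dd Ks (stp Ks x) = {\<sigma>, x}" using st e(2) xt by simp
          then have "x \<in> upper_regular Ks" unfolding upper_iff using xK by blast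
          then show ?thesis by (rule UnI2)
        qed
      next
        case f
        have "x = \<nu>" using xD unfolding f by simp
        then have "Dd Ks (stp Ks x) = {x}" using f by simp
        then have "x \<in> critical Ks" unfolding crit_iff using xK by blast
        then show ?thesis by (rule UnI1[OF UnI1])
      qed
    qed
    have "\<And>x. x \<in> critical Ks \<Longrightarrow> x \<in> K" unfolding crit_iff by (elim conjE)
    moreover have "\<And>x. x \<in> lower_regular Ks \<Longrightarrow> x \<in> K" unfolding lower_iff by (elim conjE)
    moreover have "\<And>x. x \<in> upper_regular Ks \<Longrightarrow> x \<in> K" unfolding upper_iff by (elim conjE)
    ultimately show "critical Ks \<union> lower_regular Ks \<union> upper_regular Ks \<subseteq> K" by blast
  qed
  show "critical Ks \<inter> lower_regular Ks = {}"
  proof (rule ccontr)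
    assume "critical Ks \<inter> lower_regular Ks \<noteq> {}"
    then obtain x where x: "x \<in> critical Ks" "x \<in> lower_regular Ks" by blast
    from x(1) have a: "Dd Ks (stp Ks x) = {x}" unfolding crit_iff by (elim conjE)
    from x(2) obtain \<tau> where t: "x \<subset> \<tau>" "Dd Ks (stp Ks x) = {x, \<tau>}" unfolding lower_iff by (elim conjE exE)
    have "\<tau> \<in> {x, \<tau>}" by simp
    then have "\<tau> \<in> {x}" using a t(2) by simp
    then show False using t(1) by simp
  qed
  show "critical Ks \<inter> upper_regular Ks = {}"
  proof (rule ccontr)
    assume "critical Ks \<inter> upper_regular Ks \<noteq> {}"
    then obtain x where x: "x \<in> critical Ks" "x \<in> upper_regular Ks" by blast
    from x(1) have a: "Dd Ks (stp Ks x) = {x}" unfolding crit_iff by (elim conjE)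
    from x(2) obtain \<sigma> where t: "\<sigma> \<subset> x" "Dd Ks (stp Ks x) = {\<sigma>, x}" unfolding upper_iff by (elim conjE exE)
    have "\<sigma> \<in> {\<sigma>, x}" by simp
    then have "\<sigma> \<in> {x}" using a t(2) by simp
    then show False using t(1) by simp
  qed
  show "lower_regular Ks \<inter> upper_regular Ks = {}"
  proof (rule ccontr)
    assume "lower_regular Ks \<inter> upper_regular Ks \<noteq> {}"
    then obtain x where x: "x \<in> lower_regular Ks" "x \<in> upper_regular Ks" by blast
    from x(1) obtain \<tau> where t: "x \<subset> \<tau>" "Dd Ks (stp Ks x) = {x, \<tau>}" unfolding lower_iff by (elim conjE exE)
    from x(2) obtain \<sigma> where s: "\<sigma> \<subset> x" "Dd Ks (stp Ks x) = {\<sigma>, x}" unfolding upper_iff by (elim conjE exE)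
    have "\<tau> \<in> {x, \<tau>}" by simp
    then have "\<tau> \<in> {\<sigma>, x}" using t(2) s(2) by simp
    then have "\<tau> = \<sigma> \<or> \<tau> = x" by simp
    then show False
    proof
      assume "\<tau> = \<sigma>" then show False using t(1) s(1) by (simp add: less_asym')
    next
      assume "\<tau> = x" then show False using t(1) by simp
    qed
  qed
qed


lemma lower_pair:
  assumes sl: "\<sigma> \<in> lower_regular Ks"
  shows "mt Ks \<sigma> \<in> upper_regular Ks" "mt Ks (mt Ks \<sigma>) = \<sigma>" "\<sigma> \<subset> mt Ks \<sigma>"
    "stp Ks (mt Ks \<sigma>) = stp Ks \<sigma>" "free_pair (Ks ! (Suc (stp Ks \<sigma>))) \<sigma> (mt Ks \<sigma>)"
    "card (mt Ks \<sigma>) = card \<sigma> + 1" "\<sigma> \<in> K" "mt Ks \<sigma> \<in> K"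
proof -
  from sl obtain \<tau> where \<sigma>K: "\<sigma> \<in> K" and t: "\<sigma> \<subset> \<tau>" and D: "Dd Ks (stp Ks \<sigma>) = {\<sigma>, \<tau>}"
    unfolding lower_iff by (elim conjE exE)
  show "\<sigma> \<in> K" by (rule \<sigma>K)
  define i where "i = stp Ks \<sigma>"
  have il: "i + 1 < length Ks" using st_props(1)[OF \<sigma>K] unfolding i_def by simp
  have ne: "\<tau> \<noteq> \<sigma>" using t by blast
  have mt: "mt Ks \<sigma> = \<tau>" unfolding mt_def D
  proof (rule some_equality)
    show "\<tau> \<in> {\<sigma>, \<tau>} \<and> \<tau> \<noteq> \<sigma>" using ne by simp
    show "y = \<tau>" if "y \<in> {\<sigma>, \<tau>} \<and> y \<noteq> \<sigma>" for y using that by blast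
  qed
  have tD: "\<tau> \<in> Dd Ks i" using D unfolding i_def by simp
  have sti: "stp Ks \<tau> = i" and \<tau>K: "\<tau> \<in> K" using Dd_st[OF il tD] by simp_all
  show "mt Ks \<sigma> \<in> K" using \<tau>K mt by simp
  show "stp Ks (mt Ks \<sigma>) = stp Ks \<sigma>" using sti mt i_def by simp
  have D2: "Dd Ks (stp Ks \<tau>) = {\<sigma>, \<tau>}" using D sti i_def by simp
  have "\<tau> \<in> K \<and> (\<exists>\<sigma>'. \<sigma>' \<subset> \<tau> \<and> Dd Ks (stp Ks \<tau>) = {\<sigma>', \<tau>})"
    using \<tau>K t D2 by blast
  then show "mt Ks \<sigma> \<in> upper_regular Ks" unfolding upper_iff mt .
  have "mt Ks \<tau> = \<sigma>" unfolding mt_def D2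
  proof (rule some_equality)
    show "\<sigma> \<in> {\<sigma>, \<tau>} \<and> \<sigma> \<noteq> \<tau>" using ne by simp
    show "y = \<sigma>" if "y \<in> {\<sigma>, \<tau>} \<and> y \<noteq> \<tau>" for y using that by blast
  qed
  then show "mt Ks (mt Ks \<sigma>) = \<sigma>" using mt by simp
  show "\<sigma> \<subset> mt Ks \<sigma>" using t mt by simp
  have fp: "free_pair (Ks ! (Suc i)) \<sigma> \<tau>" using pair_free[OF il t] D i_def by simp
  then show "free_pair (Ks ! (Suc (stp Ks \<sigma>))) \<sigma> (mt Ks \<sigma>)" using mt i_def by simp
  have "card \<tau> = card \<sigma> + 1" using card_free[OF cx[of "Suc i"] fp] il by simp
  then show "card (mt Ks \<sigma>) = card \<sigma> + 1" using mt by simp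
qed

lemma upper_pair:
  assumes tu: "\<tau> \<in> upper_regular Ks"
  shows "mt Ks \<tau> \<in> lower_regular Ks" "mt Ks (mt Ks \<tau>) = \<tau>"
proof -
  from tu obtain \<sigma> where \<tau>K: "\<tau> \<in> K" and t: "\<sigma> \<subset> \<tau>" and D: "Dd Ks (stp Ks \<tau>) = {\<sigma>, \<tau>}"
    unfolding upper_iff by (elim conjE exE)
  define i where "i = stp Ks \<tau>"
  have il: "i + 1 < length Ks" using st_props(1)[OF \<tau>K] unfolding i_def by simp
  have ne: "\<tau> \<noteq> \<sigma>" using t by blast
  have sD: "\<sigma> \<in> Dd Ks i" using D unfolding i_def by simp
  have sti: "stp Ks \<sigma> = i" and \<sigma>K: "\<sigma> \<in> K" using Dd_st[OF il sD] by simp_all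
  have D2: "Dd Ks (stp Ks \<sigma>) = {\<sigma>, \<tau>}" using D sti i_def by simp
  have "\<sigma> \<in> K \<and> (\<exists>\<tau>'. \<sigma> \<subset> \<tau>' \<and> Dd Ks (stp Ks \<sigma>) = {\<sigma>, \<tau>'})"
    using \<sigma>K t D2 by blast
  then have sl: "\<sigma> \<in> lower_regular Ks" unfolding lower_iff .
  have mt: "mt Ks \<tau> = \<sigma>" unfolding mt_def D
  proof (rule some_equality)
    show "\<sigma> \<in> {\<sigma>, \<tau>} \<and> \<sigma> \<noteq> \<tau>" using ne by simp
    show "y = \<sigma>" if "y \<in> {\<sigma>, \<tau>} \<and> y \<noteq> \<tau>" for y using that by blast
  qed
  show "mt Ks \<tau> \<in> lower_regular Ks" using sl mt by simp
  have "mt Ks \<sigma> = \<tau>" unfolding mt_def D2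
  proof (rule some_equality)
    show "\<tau> \<in> {\<sigma>, \<tau>} \<and> \<tau> \<noteq> \<sigma>" using ne by simp
    show "y = \<tau>" if "y \<in> {\<sigma>, \<tau>} \<and> y \<noteq> \<sigma>" for y using that by blast
  qed
  then show "mt Ks (mt Ks \<tau>) = \<tau>" using mt by simp
qed

lemma later:
  assumes sl: "\<sigma> \<in> lower_regular Ks" and \<rho>K: "\<rho> \<in> K" and sub: "\<sigma> \<subseteq> \<rho>"
    and n1: "\<rho> \<noteq> \<sigma>" and n2: "\<rho> \<noteq> mt Ks \<sigma>"
  shows "stp Ks \<sigma> < stp Ks \<rho>"
proof -
  have \<sigma>K: "\<sigma> \<in> K" using lower_pair(7)[OF sl] .
  define i where "i = stp Ks \<sigma>"
  have il: "Suc i < length Ks" using st_props(1)[OF \<sigma>K] unfolding i_def .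
  have fp: "free_pair (Ks ! (Suc i)) \<sigma> (mt Ks \<sigma>)" using lower_pair(5)[OF sl] unfolding i_def .
  have "\<rho> \<notin> Ks ! (Suc i)"
  proof
    assume "\<rho> \<in> Ks ! (Suc i)"
    then have "\<rho> = mt Ks \<sigma>" using free_pairD(4)[OF fp _ sub n1] by simp
    then show False using n2 by simp
  qed
  then have "\<not> stp Ks \<rho> < Suc i" using mem_iff[OF \<rho>K il] by simp
  then show ?thesis unfolding i_def by simp
qed

lemma earlier:
  assumes sl: "\<sigma> \<in> lower_regular Ks" and \<rho>K: "\<rho> \<in> K" and sub: "\<rho> \<subset> mt Ks \<sigma>"
    and n1: "\<rho> \<noteq> \<sigma>"
  shows "stp Ks \<rho> < stp Ks \<sigma>"
proof -
  have \<sigma>K: "\<sigma> \<in> K" using lower_pair(7)[OF sl] .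
  define i where "i = stp Ks \<sigma>"
  define \<tau> where "\<tau> = mt Ks \<sigma>"
  have il: "Suc i < length Ks" using st_props(1)[OF \<sigma>K] unfolding i_def .
  have fp: "free_pair (Ks ! (Suc i)) \<sigma> \<tau>" using lower_pair(5)[OF sl] unfolding i_def \<tau>_def .
  have \<tau>in: "\<tau> \<in> Ks ! (Suc i)" using free_pairD(3)[OF fp] .
  have \<rho>ne: "\<rho> \<noteq> {}" using scD(2)[OF cK \<rho>K] .
  have \<rho>in: "\<rho> \<in> Ks ! (Suc i)" using scD(3)[OF cx[OF il] \<tau>in] sub \<rho>ne unfolding \<tau>_def by blast
  have D: "Dd Ks i = {\<sigma>, \<tau>}"
  proof -
    have "\<sigma> \<in> Dd Ks i" using st_props(2,3)[OF \<sigma>K] unfolding Dd_def i_def by simp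
    have "\<tau> \<in> Ks ! (Suc i)" by (rule \<tau>in)
    have "Suc i < length Ks" by (rule il)
    from sl obtain \<tau>' where t': "\<sigma> \<subset> \<tau>'" and D': "Dd Ks (stp Ks \<sigma>) = {\<sigma>, \<tau>'}"
      unfolding lower_iff by (elim conjE exE)
    have "mt Ks \<sigma> = \<tau>'" unfolding mt_def D'
    proof (rule some_equality)
      show "\<tau>' \<in> {\<sigma>, \<tau>'} \<and> \<tau>' \<noteq> \<sigma>" using t' by auto
      show "y = \<tau>'" if "y \<in> {\<sigma>, \<tau>'} \<and> y \<noteq> \<sigma>" for y using that by blast
    qed
    then show ?thesis using D' unfolding i_def \<tau>_def by simp
  qed
  have "\<rho> \<notin> Dd Ks i" unfolding D using n1 sub unfolding \<tau>_def by auto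
  then have "\<rho> \<in> Ks ! i" using \<rho>in unfolding Dd_def by simp
  then show ?thesis using mem_iff[OF \<rho>K, of i] il unfolding i_def by simp
qed

lemma Kfin: "finite K" using cK unfolding simplicial_complex_def by (elim conjE)

lemma mt_dim:
  assumes sK: "\<sigma> \<in> K"
  shows "simplices_of_dim K (card \<sigma> - 1) = {w\<in>K. card w = card \<sigma>}"
proof -
  have "finite \<sigma>" "\<sigma> \<noteq> {}" using scD(1,2)[OF cK sK] by simp_all
  then have "card \<sigma> > 0" by (simp add: card_gt_0_iff)
  then show ?thesis unfolding simplices_of_dim_def by simp
qed

lemma crit_sub: "critical Ks \<subseteq> K" using partition(1) by blast

lemma dimset: "\<sigma> \<in> K \<Longrightarrow> critical Ks \<inter> simplices_of_dim K (card \<sigma> - 1) = {w\<in>critical Ks. card w = card \<sigma>}"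
  using mt_dim crit_sub by auto

lemma ref_ok: "is_reference K Ks (reference K Ks)"
proof -
  have ex: "\<exists>!f. gprop K (critical Ks) (upper_regular Ks) (bd K) f"
  proof (rule gen_ref[where S = "lower_regular Ks" and mate = "mt Ks" and r = "stp Ks"])
    show "finite K" by (rule Kfin)
    show "K = critical Ks \<union> lower_regular Ks \<union> upper_regular Ks" by (rule partition(1))
    show "critical Ks \<inter> lower_regular Ks = {}" by (rule partition(2))
    show "critical Ks \<inter> upper_regular Ks = {}" by (rule partition(3))
    show "lower_regular Ks \<inter> upper_regular Ks = {}" by (rule partition(4))
    show "mt Ks s \<in> upper_regular Ks \<and> mt Ks (mt Ks s) = s" if "s \<in> lower_regular Ks" for s
      using lower_pair(1,2)[OF that] by simp
    show "mt Ks k \<in> lower_regular Ks \<and> mt Ks (mt Ks k) = k" if "k \<in> upper_regular Ks" for k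
      using upper_pair[OF that] by simp
    show "mt Ks k \<in> bd K k \<and> bd K k \<subseteq> K \<and>
          (\<forall>x\<in>bd K k - {mt Ks k}. stp Ks x < stp Ks (mt Ks k) \<and> card x = card (mt Ks k))"
      if ku: "k \<in> upper_regular Ks" for k
    proof -
      define \<sigma> where "\<sigma> = mt Ks k"
      have sl: "\<sigma> \<in> lower_regular Ks" and mk: "mt Ks \<sigma> = k" using upper_pair[OF ku] unfolding \<sigma>_def by simp_all
      have p: "\<sigma> \<subset> k" "card k = card \<sigma> + 1" "\<sigma> \<in> K" "k \<in> K"
        using lower_pair(3,6,7,8)[OF sl] mk by simp_all
      have a: "\<sigma> \<in> bd K k" unfolding bd_def using p by simp
      have b: "bd K k \<subseteq> K" unfolding bd_def by blast
      have c: "stp Ks x < stp Ks \<sigma> \<and> card x = card \<sigma>" if x: "x \<in> bd K k - {\<sigma>}" for x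
      proof -
        have xK: "x \<in> K" and xs: "x \<subset> k" and cx: "card x + 1 = card k" and xn: "x \<noteq> \<sigma>"
          using x unfolding bd_def by auto
        have "stp Ks x < stp Ks \<sigma>" using earlier[OF sl xK _ xn] xs mk by simp
        then show ?thesis using cx p(2) by simp
      qed
      show ?thesis using a b c unfolding \<sigma>_def by blast
    qed
  qed
  have eqv: "gprop K (critical Ks) (upper_regular Ks) (bd K) f \<longleftrightarrow> is_reference K Ks f" for f
    unfolding gprop_def is_reference_def using dimset by (simp cong: ball_cong)
  have "\<exists>!f. is_reference K Ks f" using ex unfolding eqv .
  then show ?thesis unfolding reference_def by (rule theI')
qed

lemma coref_ok: "is_coreference K Ks (coreference K Ks)"
proof -
  have ex: "\<exists>!f. gprop K (critical Ks) (lower_regular Ks) (cobd K) f"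
  proof (rule gen_ref[where S = "upper_regular Ks" and mate = "mt Ks" and r = "\<lambda>x. length Ks - stp Ks x"])
    show "finite K" by (rule Kfin)
    show "K = critical Ks \<union> upper_regular Ks \<union> lower_regular Ks" using partition(1) by blast
    show "critical Ks \<inter> upper_regular Ks = {}" by (rule partition(3))
    show "critical Ks \<inter> lower_regular Ks = {}" by (rule partition(2))
    show "upper_regular Ks \<inter> lower_regular Ks = {}" using partition(4) by blast
    show "mt Ks s \<in> lower_regular Ks \<and> mt Ks (mt Ks s) = s" if "s \<in> upper_regular Ks" for s
      using upper_pair[OF that] by simp
    show "mt Ks k \<in> upper_regular Ks \<and> mt Ks (mt Ks k) = k" if "k \<in> lower_regular Ks" for k
      using lower_pair(1,2)[OF that] by simp
    show "mt Ks k \<in> cobd K k \<and> cobd K k \<subseteq> K \<and>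
          (\<forall>x\<in>cobd K k - {mt Ks k}. length Ks - stp Ks x < length Ks - stp Ks (mt Ks k) \<and> card x = card (mt Ks k))"
      if kl: "k \<in> lower_regular Ks" for k
    proof -
      define \<tau> where "\<tau> = mt Ks k"
      have p: "k \<subset> \<tau>" "card \<tau> = card k + 1" "k \<in> K" "\<tau> \<in> K" "stp Ks \<tau> = stp Ks k"
        using lower_pair(3,6,7,8,4)[OF kl] unfolding \<tau>_def by simp_all
      have a: "\<tau> \<in> cobd K k" unfolding cobd_def using p by simp
      have b: "cobd K k \<subseteq> K" unfolding cobd_def by blast
      have c: "length Ks - stp Ks x < length Ks - stp Ks \<tau> \<and> card x = card \<tau>" if x: "x \<in> cobd K k - {\<tau>}" for x
      proof -
        have xK: "x \<in> K" and xs: "k \<subset> x" and cx: "card x = card k + 1" and xn: "x \<noteq> \<tau>"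
          using x unfolding cobd_def by auto
        have lt: "stp Ks k < stp Ks x" using later[OF kl xK _ _] xs xn unfolding \<tau>_def by auto
        have "Suc (stp Ks x) < length Ks" using st_props(1)[OF xK] .
        then have "length Ks - stp Ks x < length Ks - stp Ks \<tau>" using lt p(5) by simp
        then show ?thesis using cx p(2) by simp
      qed
      show ?thesis using a b c unfolding \<tau>_def by blast
    qed
  qed
  have eqv: "gprop K (critical Ks) (lower_regular Ks) (cobd K) f \<longleftrightarrow> is_coreference K Ks f" for f
    unfolding gprop_def is_coreference_def using dimset by (simp cong: ball_cong)
  have "\<exists>!f. is_coreference K Ks f" using ex unfolding eqv .
  then show ?thesis unfolding coreference_def by (rule theI')
qed


end



lemma even_T:
  assumes cK: "simplicial_complex K" and \<rho>K: "\<rho> \<in> K" and \<nu>K: "\<nu> \<in> K"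
  shows "even (card {\<tau>\<in>K. \<rho> \<subset> \<tau> \<and> \<tau> \<subset> \<nu> \<and> card \<tau> = card \<rho> + 1 \<and> card \<nu> = card \<tau> + 1})"
proof (cases "{\<tau>\<in>K. \<rho> \<subset> \<tau> \<and> \<tau> \<subset> \<nu> \<and> card \<tau> = card \<rho> + 1 \<and> card \<nu> = card \<tau> + 1} = {}")
  case True then show ?thesis by (metis card.empty even_zero)
next
  case False
  define T where "T = {\<tau>\<in>K. \<rho> \<subset> \<tau> \<and> \<tau> \<subset> \<nu> \<and> card \<tau> = card \<rho> + 1 \<and> card \<nu> = card \<tau> + 1}"
  obtain \<tau>0 where t0: "\<tau>0 \<in> T" using False unfolding T_def by blast
  have t0p: "\<rho> \<subset> \<tau>0" "\<tau>0 \<subset> \<nu>" "card \<tau>0 = card \<rho> + 1" "card \<nu> = card \<tau>0 + 1"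
    using t0 unfolding T_def by simp_all
  have fn: "finite \<nu>" using scD(1)[OF cK \<nu>K] .
  have r\<nu>: "\<rho> \<subseteq> \<nu>" using t0p(1,2) by simp
  have fr: "finite \<rho>" using fn r\<nu> finite_subset by blast
  have cn: "card \<nu> = card \<rho> + 2" using t0p by simp
  have cd: "card (\<nu> - \<rho>) = 2" using card_Diff_subset[OF fr r\<nu>] cn by simp
  have Teq: "T = (\<lambda>w. insert w \<rho>) ` (\<nu> - \<rho>)"
  proof
    show "T \<subseteq> (\<lambda>w. insert w \<rho>) ` (\<nu> - \<rho>)"
    proof
      fix \<tau> assume t: "\<tau> \<in> T"
      have tp: "\<rho> \<subset> \<tau>" "\<tau> \<subset> \<nu>" "card \<tau> = card \<rho> + 1" using t unfolding T_def by simp_all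
      have "card (\<tau> - \<rho>) = 1" using card_Diff_subset[OF fr] tp by simp
      then obtain w where w: "\<tau> - \<rho> = {w}" by (rule card_1_singletonE)
      have "\<tau> = insert w \<rho>" using w tp(1) by blast
      moreover have "w \<in> \<nu> - \<rho>" using w tp(2) by blast
      ultimately show "\<tau> \<in> (\<lambda>w. insert w \<rho>) ` (\<nu> - \<rho>)" by blast
    qed
    show "(\<lambda>w. insert w \<rho>) ` (\<nu> - \<rho>) \<subseteq> T"
    proof
      fix \<tau> assume "\<tau> \<in> (\<lambda>w. insert w \<rho>) ` (\<nu> - \<rho>)"
      then obtain w where w: "w \<in> \<nu>" "w \<notin> \<rho>" and teq: "\<tau> = insert w \<rho>" by blast
      have sub: "\<tau> \<subseteq> \<nu>" using w r\<nu> teq by blast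
      have ct: "card \<tau> = card \<rho> + 1" using teq w fr by simp
      have tK: "\<tau> \<in> K" using scD(3)[OF cK \<nu>K sub] teq by blast
      have "\<tau> \<noteq> \<nu>" using ct cn by auto
      then have "\<tau> \<subset> \<nu>" using sub by blast
      moreover have "\<rho> \<subset> \<tau>" using teq w by blast
      ultimately show "\<tau> \<in> T" unfolding T_def using tK ct cn by simp
    qed
  qed
  have inj: "inj_on (\<lambda>w. insert w \<rho>) (\<nu> - \<rho>)"
  proof (rule inj_onI)
    fix a b assume "a \<in> \<nu> - \<rho>" "b \<in> \<nu> - \<rho>" "insert a \<rho> = insert b \<rho>"
    then show "a = b" by blast
  qed
  have "card T = 2" unfolding Teq using card_image[OF inj] cd by simp
  then show ?thesis unfolding T_def by simp
qed

lemma bdbd: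
  assumes cK: "simplicial_complex K" and xK: "x \<subseteq> K"
  shows "zsum (bd K) (zsum (bd K) x) = {}"
proof -
  have fK: "finite K" using cK unfolding simplicial_complex_def by (elim conjE)
  have fx: "finite x" using xK fK finite_subset by blast
  have fb: "\<And>a. a \<in> x \<Longrightarrow> finite (bd K a)" unfolding bd_def using fK by simp
  have "zsum (bd K) (zsum (bd K) x) = zsum (\<lambda>\<nu>. zsum (bd K) (bd K \<nu>)) x"
    by (rule zsum_fubini[OF fx fb])
  also have "\<dots> = {}"
  proof (rule zsum_empty_fun)
    fix \<nu> assume \<nu>x: "\<nu> \<in> x"
    have \<nu>K: "\<nu> \<in> K" using \<nu>x xK by blast
    have "\<rho> \<notin> zsum (bd K) (bd K \<nu>)" for \<rho>
    proof (cases "\<rho> \<in> K")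
      case False
      then have e: "{\<tau>\<in>bd K \<nu>. \<rho> \<in> bd K \<tau>} = {}" unfolding bd_def by simp
      show ?thesis unfolding zsum_mem e by simp
    next
      case True
      have "{\<tau>\<in>bd K \<nu>. \<rho> \<in> bd K \<tau>} =
          {\<tau>\<in>K. \<rho> \<subset> \<tau> \<and> \<tau> \<subset> \<nu> \<and> card \<tau> = card \<rho> + 1 \<and> card \<nu> = card \<tau> + 1}"
        unfolding bd_def using True by auto
      then show ?thesis unfolding zsum_mem using even_T[OF cK True \<nu>K] by simp
    qed
    then show "zsum (bd K) (bd K \<nu>) = {}" by blast
  qed
  finally show ?thesis .
qed

lemma cobdcobd:
  assumes cK: "simplicial_complex K" and xK: "x \<subseteq> K"
  shows "zsum (cobd K) (zsum (cobd K) x) = {}"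
proof -
  have fK: "finite K" using cK unfolding simplicial_complex_def by (elim conjE)
  have fx: "finite x" using xK fK finite_subset by blast
  have fb: "\<And>a. a \<in> x \<Longrightarrow> finite (cobd K a)" unfolding cobd_def using fK by simp
  have "zsum (cobd K) (zsum (cobd K) x) = zsum (\<lambda>\<nu>. zsum (cobd K) (cobd K \<nu>)) x"
    by (rule zsum_fubini[OF fx fb])
  also have "\<dots> = {}"
  proof (rule zsum_empty_fun)
    fix \<nu> assume \<nu>x: "\<nu> \<in> x"
    have \<nu>K: "\<nu> \<in> K" using \<nu>x xK by blast
    have "\<rho> \<notin> zsum (cobd K) (cobd K \<nu>)" for \<rho>
    proof (cases "\<rho> \<in> K")
      case False
      then have e: "{\<tau>\<in>cobd K \<nu>. \<rho> \<in> cobd K \<tau>} = {}" unfolding cobd_def by simp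
      show ?thesis unfolding zsum_mem e by simp
    next
      case True
      have "{\<tau>\<in>cobd K \<nu>. \<rho> \<in> cobd K \<tau>} =
          {\<tau>\<in>K. \<nu> \<subset> \<tau> \<and> \<tau> \<subset> \<rho> \<and> card \<tau> = card \<nu> + 1 \<and> card \<rho> = card \<tau> + 1}"
        unfolding cobd_def using True by auto
      then show ?thesis unfolding zsum_mem using even_T[OF cK \<nu>K True] by simp
    qed
    then show "zsum (cobd K) (cobd K \<nu>) = {}" by blast
  qed
  finally show ?thesis .
qed

theorem theorem9:
  fixes K :: "'v set set" and Ks :: "'v set set list"
  assumes "simplicial_complex K" and "morse_sequence Ks K"
  shows "\<forall>p. \<forall>c \<in> critical_chains K Ks p.
           bd_chain K (extension K Ks c) = extension K Ks (hat_bd K Ks c) \<and>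
           cobd_chain K (coextension K Ks c) = coextension K Ks (hat_cobd K Ks c)"
proof (intro allI ballI conjI)
  note cK = assms(1) and ms = assms(2)
  fix p c assume "c \<in> critical_chains K Ks p"
  then have cW: "c \<subseteq> critical Ks" unfolding critical_chains_def by blast
  note part = partition[OF cK ms]
  have fK: "finite K" using Kfin[OF cK ms] .
  have refp: "is_reference K Ks (reference K Ks)" by (rule ref_ok[OF cK ms])
  have corefp: "is_coreference K Ks (coreference K Ks)" by (rule coref_ok[OF cK ms])
  have rW: "\<And>w. w \<in> critical Ks \<Longrightarrow> reference K Ks w = {w}"
    using refp unfolding is_reference_def by simp
  have rU: "\<And>b. b \<in> upper_regular Ks \<Longrightarrow> reference K Ks b = {} \<and> zsum (reference K Ks) (bd K b) = {}"
    using refp unfolding is_reference_def by simp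
  have cW': "\<And>w. w \<in> critical Ks \<Longrightarrow> coreference K Ks w = {w}"
    using corefp unfolding is_coreference_def by simp
  have cL: "\<And>b. b \<in> lower_regular Ks \<Longrightarrow> coreference K Ks b = {} \<and> zsum (coreference K Ks) (cobd K b) = {}"
    using corefp unfolding is_coreference_def by simp
  have bdK: "\<And>v. bd K v \<subseteq> K" unfolding bd_def by blast
  have cobdK: "\<And>v. cobd K v \<subseteq> K" unfolding cobd_def by blast
  have tr: "\<And>a b. a \<in> K \<Longrightarrow> b \<in> K \<Longrightarrow> a \<in> bd K b \<longleftrightarrow> b \<in> cobd K a"
    unfolding bd_def cobd_def by auto
  show "bd_chain K (extension K Ks c) = extension K Ks (hat_bd K Ks c)"
    unfolding bd_chain_def extension_def hat_bd_def
  proof (rule gen_main[where W = "critical Ks" and A = "lower_regular Ks" and B = "upper_regular Ks"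
        and F' = "cobd K"])
    show "finite K" by (rule fK)
    show "K = critical Ks \<union> lower_regular Ks \<union> upper_regular Ks" by (rule part(1))
    show "critical Ks \<inter> lower_regular Ks = {}" by (rule part(2))
    show "critical Ks \<inter> upper_regular Ks = {}" by (rule part(3))
    show "lower_regular Ks \<inter> upper_regular Ks = {}" by (rule part(4))
    show "\<And>v. v \<in> K \<Longrightarrow> bd K v \<subseteq> K" by (rule bdK)
    show "\<And>v. v \<in> K \<Longrightarrow> cobd K v \<subseteq> K" by (rule cobdK)
    show "\<And>a b. a \<in> K \<Longrightarrow> b \<in> K \<Longrightarrow> a \<in> bd K b \<longleftrightarrow> b \<in> cobd K a" by (rule tr)
    show "\<And>x. x \<subseteq> K \<Longrightarrow> zsum (bd K) (zsum (bd K) x) = {}" by (rule bdbd[OF cK])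
    show "\<And>w. w \<in> critical Ks \<Longrightarrow> coreference K Ks w = {w}" by (rule cW')
    show "\<And>a. a \<in> lower_regular Ks \<Longrightarrow> coreference K Ks a = {} \<and> zsum (coreference K Ks) (cobd K a) = {}"
      by (rule cL)
    show "\<And>w. w \<in> critical Ks \<Longrightarrow> reference K Ks w = {w}" by (rule rW)
    show "\<And>b. b \<in> upper_regular Ks \<Longrightarrow> reference K Ks b = {} \<and> zsum (reference K Ks) (bd K b) = {}"
      by (rule rU)
    show "c \<subseteq> critical Ks" by (rule cW)
    show "\<exists>b\<in>d. \<exists>a\<in>lower_regular Ks. a \<in> bd K b \<and> (\<forall>b'\<in>d. a \<in> bd K b' \<longrightarrow> b' = b)"
      if dU: "d \<subseteq> upper_regular Ks" and dne: "d \<noteq> {}" for d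
    proof -
      have fd: "finite d" using dU part(1) fK finite_subset by blast
      define M where "M = Max (stp Ks ` d)"
      have "M \<in> stp Ks ` d" unfolding M_def using fd dne by simp
      then obtain b where bd: "b \<in> d" and bM: "stp Ks b = M" by blast
      have mx: "\<And>b'. b' \<in> d \<Longrightarrow> stp Ks b' \<le> stp Ks b" unfolding bM M_def using fd by simp
      have bu: "b \<in> upper_regular Ks" using bd dU by blast
      define a where "a = mt Ks b"
      have al: "a \<in> lower_regular Ks" and ma: "mt Ks a = b" using upper_pair[OF cK ms bu] unfolding a_def by simp_all
      have ap: "a \<subset> b" "card b = card a + 1" "a \<in> K" "b \<in> K" "stp Ks b = stp Ks a"
        using lower_pair(3,6,7,8,4)[OF cK ms al] ma by simp_all
      have abd: "a \<in> bd K b" unfolding bd_def using ap by simp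
      have uq: "b' = b" if b'd: "b' \<in> d" and ab': "a \<in> bd K b'" for b'
      proof (rule ccontr)
        assume nb: "b' \<noteq> b"
        have b'K: "b' \<in> K" using b'd dU part(1) by blast
        have as: "a \<subset> b'" using ab' unfolding bd_def by simp
        have "stp Ks a < stp Ks b'" using later[OF cK ms al b'K _ _ ] as nb ma by auto
        then show False using mx[OF b'd] ap(5) by simp
      qed
      show ?thesis using bd al abd uq by blast
    qed
  qed
  show "cobd_chain K (coextension K Ks c) = coextension K Ks (hat_cobd K Ks c)"
    unfolding cobd_chain_def coextension_def hat_cobd_def
  proof (rule gen_main[where W = "critical Ks" and A = "upper_regular Ks" and B = "lower_regular Ks"
        and F' = "bd K"])
    show "finite K" by (rule fK)
    show "K = critical Ks \<union> upper_regular Ks \<union> lower_regular Ks" using part(1) by blast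
    show "critical Ks \<inter> upper_regular Ks = {}" by (rule part(3))
    show "critical Ks \<inter> lower_regular Ks = {}" by (rule part(2))
    show "upper_regular Ks \<inter> lower_regular Ks = {}" using part(4) by blast
    show "\<And>v. v \<in> K \<Longrightarrow> cobd K v \<subseteq> K" by (rule cobdK)
    show "\<And>v. v \<in> K \<Longrightarrow> bd K v \<subseteq> K" by (rule bdK)
    show "\<And>a b. a \<in> K \<Longrightarrow> b \<in> K \<Longrightarrow> a \<in> cobd K b \<longleftrightarrow> b \<in> bd K a" using tr by blast
    show "\<And>x. x \<subseteq> K \<Longrightarrow> zsum (cobd K) (zsum (cobd K) x) = {}" by (rule cobdcobd[OF cK])
    show "\<And>w. w \<in> critical Ks \<Longrightarrow> reference K Ks w = {w}" by (rule rW)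
    show "\<And>a. a \<in> upper_regular Ks \<Longrightarrow> reference K Ks a = {} \<and> zsum (reference K Ks) (bd K a) = {}"
      by (rule rU)
    show "\<And>w. w \<in> critical Ks \<Longrightarrow> coreference K Ks w = {w}" by (rule cW')
    show "\<And>b. b \<in> lower_regular Ks \<Longrightarrow> coreference K Ks b = {} \<and> zsum (coreference K Ks) (cobd K b) = {}"
      by (rule cL)
    show "c \<subseteq> critical Ks" by (rule cW)
    show "\<exists>b\<in>d. \<exists>a\<in>upper_regular Ks. a \<in> cobd K b \<and> (\<forall>b'\<in>d. a \<in> cobd K b' \<longrightarrow> b' = b)"
      if dL: "d \<subseteq> lower_regular Ks" and dne: "d \<noteq> {}" for d
    proof -
      have fd: "finite d" using dL part(1) fK finite_subset by blast
      define M where "M = Min (stp Ks ` d)"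
      have "M \<in> stp Ks ` d" unfolding M_def using fd dne by simp
      then obtain b where bd: "b \<in> d" and bM: "stp Ks b = M" by blast
      have mn: "\<And>b'. b' \<in> d \<Longrightarrow> stp Ks b \<le> stp Ks b'" unfolding bM M_def using fd by simp
      have bl: "b \<in> lower_regular Ks" using bd dL by blast
      define a where "a = mt Ks b"
      have au: "a \<in> upper_regular Ks" using lower_pair(1)[OF cK ms bl] unfolding a_def .
      have ap: "b \<subset> a" "card a = card b + 1" "b \<in> K" "a \<in> K"
        using lower_pair(3,6,7,8)[OF cK ms bl] unfolding a_def by simp_all
      have acb: "a \<in> cobd K b" unfolding cobd_def using ap by simp
      have uq: "b' = b" if b'd: "b' \<in> d" and ab': "a \<in> cobd K b'" for b'
      proof (rule ccontr)
        assume nb: "b' \<noteq> b"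
        have b'K: "b' \<in> K" using b'd dL part(1) by blast
        have as: "b' \<subset> mt Ks b" using ab' unfolding cobd_def a_def by simp
        have "stp Ks b' < stp Ks b" using earlier[OF cK ms bl b'K as nb] .
        then show False using mn[OF b'd] by simp
      qed
      show ?thesis using bd au acb uq by blast
    qed
  qed
qed


end
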